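(* Consider a finite-state, finite-action SMDP satisfying (M) that is weakly communicating, and let $f$ satisfy (F). Let $\bar\alpha\in(0,\min_{(s,a)}t_{sa}]$ and $h_\infty(q)=\mathcal{T}^o(q)-q-\bar\alpha f_\infty(q)$. Then the origin is the unique globally asymptotically stable equilibrium of the ODE $\dot x(t)=h_\infty(x(t))$.
   Context: $\mathcal{S},\mathcal{A}$ are finite, $d=|\mathcal{S}\times\mathcal{A}|$, and $\mathbf{1}$ is the all-ones vector. For each $(s,a)$, $\mathbb{P}_{sa}$ is a Borel probability measure on $\mathcal{S}\times\mathbb{R}_+\times\mathbb{R}$, the joint law of (next state $S$, holding time $\tau$, reward $R$). (M): (i) for some $\epsilon>0$, $\mathbb{P}_{sa}(\tau\le\epsilon)<1$ for all $(s,a)$; (ii) $\mathbb{E}_{sa}\tau^2,\mathbb{E}_{sa}R^2<\infty$. Let $t_{sa}=\mathbb{E}_{sa}\tau>0$ and $p^a_{ss'}=\mathbb{P}_{sa}(S=s')$. Weakly communicating means there is a unique closed communicating class (a set of states, each reachable from every other under some policy, which no policy can leave) and all other states are transient under every policy. (F): $g$ is SISTr at $x$ if $c\mapsto g(x+c\mathbf{1})$ is strictly increasing and onto $\mathbb{R}$; (i) $f:\mathbb{R}^d\to\mathbb{R}$ is Lipschitz and SISTr at every point; (ii) $f(cx)/c\to f_\infty(x)$ pointwise as $c\uparrow\infty$, with $f_\infty$ SISTr at $0$. $\mathcal{T}^o(q)(s,a)=\frac{\bar\alpha}{t_{sa}}\sum_{s'}p^a_{ss'}\max_{a'}q(s',a')+(1-\frac{\bar\alpha}{t_{sa}})q(s,a)$.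 A point is a globally asymptotically stable equilibrium if every solution converges to it and it is Lyapunov stable. *)

theory Defs
  imports "HOL-Probability.Probability"
begin

text \<open>An SMDP kernel: for each (s,a) a probability measure on S x R x R, the joint law of
  (next state, holding time, reward).\<close>

type_synonym ('s,'a) smdp = "'s \<Rightarrow> 'a \<Rightarrow> ('s \<times> real \<times> real) measure"

definition holding :: "'s \<times> real \<times> real \<Rightarrow> real" where
  "holding \<omega> = fst (snd \<omega>)"

definition reward :: "'s \<times> real \<times> real \<Rightarrow> real" where
  "reward \<omega> = snd (snd \<omega>)"

definition smdp_kernel :: "('s::finite,'a::finite) smdp \<Rightarrow> bool" where
  "smdp_kernel P \<longleftrightarrow> (\<forall>s a. prob_space (P s a) \<and>
      sets (P s a) = sets (count_space UNIV \<Otimes>\<^sub>M (borel \<Otimes>\<^sub>M borel)) \<and>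
      (AE \<omega> in P s a. 0 \<le> holding \<omega>))"

definition assumption_M :: "('s::finite,'a::finite) smdp \<Rightarrow> bool" where
  "assumption_M P \<longleftrightarrow>
     (\<exists>\<epsilon>>0. \<forall>s a. measure (P s a) {\<omega> \<in> space (P s a). holding \<omega> \<le> \<epsilon>} < 1) \<and>
     (\<forall>s a. integrable (P s a) (\<lambda>\<omega>. (holding \<omega>)\<^sup>2) \<and> integrable (P s a) (\<lambda>\<omega>. (reward \<omega>)\<^sup>2))"

definition tmean :: "('s,'a) smdp \<Rightarrow> 's \<Rightarrow> 'a \<Rightarrow> real" where
  "tmean P s a = (\<integral>\<omega>. holding \<omega> \<partial>P s a)"

definition ptrans :: "('s,'a) smdp \<Rightarrow> 's \<Rightarrow> 'a \<Rightarrow> 's \<Rightarrow> real" where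
  "ptrans P s a s' = measure (P s a) {\<omega> \<in> space (P s a). fst \<omega> = s'}"

definition is_policy :: "('s::finite \<Rightarrow> 'a::finite \<Rightarrow> real) \<Rightarrow> bool" where
  "is_policy \<pi> \<longleftrightarrow> (\<forall>s a. 0 \<le> \<pi> s a) \<and> (\<forall>s. (\<Sum>a\<in>UNIV. \<pi> s a) = 1)"

definition policy_graph :: "('s::finite,'a::finite) smdp \<Rightarrow> ('s \<Rightarrow> 'a \<Rightarrow> real) \<Rightarrow> ('s \<times> 's) set" where
  "policy_graph P \<pi> = {(s, s'). (\<Sum>a\<in>UNIV. \<pi> s a * ptrans P s a s') > 0}"

definition reachable_under :: "('s::finite,'a::finite) smdp \<Rightarrow> ('s \<Rightarrow> 'a \<Rightarrow> real) \<Rightarrow> 's \<Rightarrow> 's \<Rightarrow> bool" where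
  "reachable_under P \<pi> s s' \<longleftrightarrow> (s, s') \<in> (policy_graph P \<pi>)\<^sup>*"

text \<open>Transience of a state in the finite Markov chain induced by \<pi>: it reaches some state
  from which it cannot be reached back.\<close>
definition transient_under :: "('s::finite,'a::finite) smdp \<Rightarrow> ('s \<Rightarrow> 'a \<Rightarrow> real) \<Rightarrow> 's \<Rightarrow> bool" where
  "transient_under P \<pi> s \<longleftrightarrow> (\<exists>s'. reachable_under P \<pi> s s' \<and> \<not> reachable_under P \<pi> s' s)"

definition communicating :: "('s::finite,'a::finite) smdp \<Rightarrow> 's set \<Rightarrow> bool" where
  "communicating P C \<longleftrightarrow> (\<forall>s\<in>C. \<forall>s'\<in>C. \<exists>\<pi>. is_policy \<pi> \<and> reachable_under P \<pi> s s')"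

definition closed_set :: "('s::finite,'a::finite) smdp \<Rightarrow> 's set \<Rightarrow> bool" where
  "closed_set P C \<longleftrightarrow> (\<forall>s\<in>C. \<forall>a s'. ptrans P s a s' > 0 \<longrightarrow> s' \<in> C)"

definition closed_comm_class :: "('s::finite,'a::finite) smdp \<Rightarrow> 's set \<Rightarrow> bool" where
  "closed_comm_class P C \<longleftrightarrow> C \<noteq> {} \<and> communicating P C \<and> closed_set P C"

definition weakly_communicating :: "('s::finite,'a::finite) smdp \<Rightarrow> bool" where
  "weakly_communicating P \<longleftrightarrow> (\<exists>C. closed_comm_class P C \<and>
      (\<forall>C'. closed_comm_class P C' \<longrightarrow> C' = C) \<and>
      (\<forall>s. s \<notin> C \<longrightarrow> (\<forall>\<pi>. is_policy \<pi> \<longrightarrow> transient_under P \<pi> s)))"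

definition SISTr :: "(real^'n \<Rightarrow> real) \<Rightarrow> real^'n \<Rightarrow> bool" where
  "SISTr g x \<longleftrightarrow> strict_mono (\<lambda>c::real. g (x + c *\<^sub>R (1::real^'n))) \<and>
                   surj (\<lambda>c::real. g (x + c *\<^sub>R (1::real^'n)))"

definition assumption_F :: "(real^'n \<Rightarrow> real) \<Rightarrow> (real^'n \<Rightarrow> real) \<Rightarrow> bool" where
  "assumption_F f finf \<longleftrightarrow> (\<exists>L. L-lipschitz_on UNIV f) \<and> (\<forall>x. SISTr f x) \<and>
     (\<forall>x. ((\<lambda>c. f (c *\<^sub>R x) / c) \<longlongrightarrow> finf x) at_top) \<and> SISTr finf 0"

definition Tzero :: "('s::finite,'a::finite) smdp \<Rightarrow> real \<Rightarrow> real^('s \<times> 'a) \<Rightarrow> real^('s \<times> 'a)" where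
  "Tzero P \<alpha> q = (\<chi> sa. case sa of (s, a) \<Rightarrow>
      \<alpha> / tmean P s a * (\<Sum>s'\<in>UNIV. ptrans P s a s' * (MAX a'. q $ (s', a')))
      + (1 - \<alpha> / tmean P s a) * q $ (s, a))"

definition ode_solution :: "('v::real_normed_vector \<Rightarrow> 'v) \<Rightarrow> (real \<Rightarrow> 'v) \<Rightarrow> bool" where
  "ode_solution h x \<longleftrightarrow> (\<forall>t\<ge>0. (x has_vector_derivative h (x t)) (at t within {0..}))"

definition lyapunov_stable :: "('v::real_normed_vector \<Rightarrow> 'v) \<Rightarrow> 'v \<Rightarrow> bool" where
  "lyapunov_stable h z \<longleftrightarrow> (\<forall>\<epsilon>>0. \<exists>\<delta>>0. \<forall>x. ode_solution h x \<and> dist (x 0) z < \<delta> \<longrightarrow>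
       (\<forall>t\<ge>0. dist (x t) z < \<epsilon>))"

definition GAS_equilibrium :: "('v::real_normed_vector \<Rightarrow> 'v) \<Rightarrow> 'v \<Rightarrow> bool" where
  "GAS_equilibrium h z \<longleftrightarrow> h z = 0 \<and>
     (\<forall>x. ode_solution h x \<longrightarrow> (x \<longlongrightarrow> z) at_top) \<and> lyapunov_stable h z"

end

theory Submission
  imports Defs
begin

lemma barrier:
  fixes u u' :: "'i \<Rightarrow> real \<Rightarrow> real" and B B' :: "real \<Rightarrow> real" and I :: "'i set"
  assumes fin: "finite I"
    and cu: "\<And>i. i \<in> I \<Longrightarrow> continuous_on {t0..} (u i)"
    and cB: "continuous_on {t0..} B"
    and du: "\<And>i t. i \<in> I \<Longrightarrow> t > t0 \<Longrightarrow> (u i has_real_derivative u' i t) (at t)"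
    and dB: "\<And>t. t > t0 \<Longrightarrow> (B has_real_derivative B' t) (at t)"
    and start: "\<And>i. i \<in> I \<Longrightarrow> u i t0 < B t0"
    and cond: "\<And>i t. i \<in> I \<Longrightarrow> t > t0 \<Longrightarrow> (\<forall>j\<in>I. u j t \<le> B t) \<Longrightarrow> u i t = B t \<Longrightarrow> u' i t < B' t"
    and i: "i \<in> I" and t: "t \<ge> t0"
  shows "u i t < B t"
proof (rule ccontr)
  assume neg: "\<not> u i t < B t"
  define S where "S = (\<Union>j\<in>I. {s \<in> {t0..}. B s \<le> u j s})"
  have clS: "closed S" unfolding S_def
    using fin by (intro closed_UN ballI continuous_on_closed_Collect_le cB cu) auto
  have tS: "t \<in> S" using neg i t unfolding S_def by force
  have bdd: "bdd_below S" unfolding S_def by (auto intro!: bdd_belowI[of _ t0])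
  define ts where "ts = Inf S"
  have tsS: "ts \<in> S" unfolding ts_def using closed_contains_Inf[OF _ bdd clS] tS by auto
  then obtain k where k: "k \<in> I" "ts \<ge> t0" "B ts \<le> u k ts" unfolding S_def by auto
  have before: "\<And>s j. j \<in> I \<Longrightarrow> t0 \<le> s \<Longrightarrow> s < ts \<Longrightarrow> u j s < B s"
  proof (rule ccontr)
    fix s j assume "j \<in> I" "t0 \<le> s" "s < ts" "\<not> u j s < B s"
    then have "s \<in> S" unfolding S_def by force
    then have "ts \<le> s" unfolding ts_def by (rule cInf_lower[OF _ bdd])
    with \<open>s < ts\<close> show False by simp
  qed
  have "ts \<noteq> t0" using k start[OF k(1)] by auto
  then have gt: "ts > t0" using k by auto
  have le: "u j ts \<le> B ts" if j: "j \<in> I" for j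
  proof -
    have c: "continuous (at ts within {t0..}) (\<lambda>s. B s - u j s)"
      using continuous_on_diff[OF cB cu[OF j]] gt
      by (simp add: continuous_on_eq_continuous_within)
    have lim: "((\<lambda>s. B s - u j s) \<longlongrightarrow> B ts - u j ts) (at ts within {t0..<ts})"
      using c unfolding continuous_within
      by (rule tendsto_within_subset) auto
    have nt: "at ts within {t0..<ts} \<noteq> bot"
      using gt by (subst at_within_eq_bot_iff) (auto simp: closure_atLeastLessThan)
    have "0 \<le> B ts - u j ts"
      apply (rule tendsto_lowerbound[OF lim _ nt])
      using before[OF j] by (auto simp: eventually_at_filter intro!: always_eventually less_imp_le)
    then show ?thesis by simp
  qed
  have eq: "u k ts = B ts" using le[OF k(1)] k by auto
  have dlt: "u' k ts < B' ts" using cond[OF k(1) gt _ eq] le by auto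
  have der: "((\<lambda>s. u k s - B s) has_real_derivative (u' k ts - B' ts)) (at ts)"
    by (intro derivative_intros du[OF k(1) gt] dB[OF gt])
  obtain d where d: "d > 0" "\<And>h. h > 0 \<Longrightarrow> h < d \<Longrightarrow> u k ts - B ts < u k (ts - h) - B (ts - h)"
    using DERIV_neg_dec_left[OF der] dlt by force
  define h where "h = min (d/2) (ts - t0)"
  have h: "h > 0" "h < d" "h \<le> ts - t0" using d gt unfolding h_def by auto
  have "u k (ts - h) < B (ts - h)" using before[OF k(1)] h by auto
  moreover have "0 < u k (ts - h) - B (ts - h)" using d(2)[OF h(1,2)] eq by simp
  ultimately show False by simp
qed

lemma exp_cmp_upper:
  fixes g g' :: "real \<Rightarrow> real"
  assumes "t1 \<le> t" "t \<le> t2" and c: "continuous_on {t1..t2} g"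
    and d: "\<And>s. t1 < s \<Longrightarrow> s < t2 \<Longrightarrow> (g has_real_derivative g' s) (at s)"
    and b: "\<And>s. t1 < s \<Longrightarrow> s < t2 \<Longrightarrow> g' s \<le> \<beta> * (A - g s)"
  shows "g t \<le> A + exp (- \<beta> * (t - t1)) * (g t1 - A)"
proof -
  define k where "k s = exp (\<beta> * s) * (g s - A)" for s
  have "k t \<le> k t1"
  proof (rule DERIV_nonpos_imp_decreasing_open[of t1 t k])
    show "t1 \<le> t" by fact
    fix s assume s: "t1 < s" "s < t"
    have "(k has_real_derivative exp (\<beta> * s) * \<beta> * (g s - A) + exp (\<beta> * s) * g' s) (at s)"
      unfolding k_def using d[of s] s assms
      by (auto intro!: derivative_eq_intros)
    moreover have "exp (\<beta> * s) * \<beta> * (g s - A) + exp (\<beta> * s) * g' s \<le> 0"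
    proof -
      have "exp (\<beta> * s) * \<beta> * (g s - A) + exp (\<beta> * s) * g' s = exp (\<beta> * s) * (g' s - \<beta> * (A - g s))"
        by (simp add: algebra_simps)
      also have "\<dots> \<le> 0" using b[of s] s assms by (intro mult_nonneg_nonpos) auto
      finally show ?thesis .
    qed
    ultimately show "\<exists>y. (k has_real_derivative y) (at s) \<and> y \<le> 0" by blast
  next
    show "continuous_on {t1..t} k" unfolding k_def
      using assms by (intro continuous_intros continuous_on_subset[OF c]) auto
  qed
  then have "exp (\<beta> * t) * (g t - A) \<le> exp (\<beta> * t1) * (g t1 - A)" unfolding k_def .
  then have "exp (-\<beta> * t) * (exp (\<beta> * t) * (g t - A)) \<le> exp (-\<beta> * t) * (exp (\<beta> * t1) * (g t1 - A))"
    by (intro mult_left_mono) auto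
  then have "g t - A \<le> exp (-\<beta> * t + \<beta> * t1) * (g t1 - A)"
    by (simp add: mult.assoc[symmetric] exp_add[symmetric])
  then show ?thesis by (simp add: algebra_simps)
qed

lemma exp_cmp_lower:
  fixes g g' :: "real \<Rightarrow> real"
  assumes "t1 \<le> t" "t \<le> t2" and c: "continuous_on {t1..t2} g"
    and d: "\<And>s. t1 < s \<Longrightarrow> s < t2 \<Longrightarrow> (g has_real_derivative g' s) (at s)"
    and b: "\<And>s. t1 < s \<Longrightarrow> s < t2 \<Longrightarrow> g' s \<ge> \<beta> * (A - g s)"
  shows "g t \<ge> A + exp (- \<beta> * (t - t1)) * (g t1 - A)"
proof -
  have "- g t \<le> - A + exp (- \<beta> * (t - t1)) * (- g t1 - - A)"
    apply (rule exp_cmp_upper[of t1 t t2 "\<lambda>s. - g s" "\<lambda>s. - g' s"])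
    using assms by (auto intro!: derivative_eq_intros continuous_intros simp: algebra_simps)
  then show ?thesis by (simp add: algebra_simps)
qed

lemma ptrans_nonneg: "0 \<le> ptrans P s a s'"
  unfolding ptrans_def by simp

lemma ptrans_sum:
  assumes "smdp_kernel P"
  shows "(\<Sum>s'\<in>UNIV. ptrans P s a s') = 1"
proof -
  let ?M = "P s a"
  have ps: "prob_space ?M" and sets: "sets ?M = sets (count_space UNIV \<Otimes>\<^sub>M (borel \<Otimes>\<^sub>M borel))"
    using assms unfolding smdp_kernel_def by auto
  interpret prob_space ?M by (rule ps)
  have fm: "fst \<in> measurable ?M (count_space UNIV)"
    using measurable_cong_sets[OF sets refl] measurable_fst by blast
  define A where "A s' = {\<omega> \<in> space ?M. fst \<omega> = s'}" for s'
  have Am: "A s' \<in> sets ?M" for s'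
  proof -
    have "A s' = fst -` {s'} \<inter> space ?M" unfolding A_def by auto
    then show ?thesis using measurable_sets[OF fm, of "{s'}"] by simp
  qed
  have "measure ?M (\<Union>s'\<in>UNIV. A s') = (\<Sum>s'\<in>UNIV. measure ?M (A s'))"
    by (rule finite_measure_finite_Union) (auto simp: Am[unfolded A_def] disjoint_family_on_def A_def)
  moreover have "(\<Union>s'\<in>UNIV. A s') = space ?M" unfolding A_def by auto
  ultimately show ?thesis unfolding ptrans_def A_def[symmetric] using prob_space by simp
qed

locale setting =
  fixes P :: "('s::finite,'a::finite) smdp" and \<alpha> :: real and C :: "'s set"
  assumes kern: "smdp_kernel P" and alpha: "0 < \<alpha>" and tm: "\<And>s a. \<alpha> \<le> tmean P s a"
    and closedC: "closed_set P C" and commC: "communicating P C"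
    and transC: "\<And>s \<pi>. s \<notin> C \<Longrightarrow> is_policy \<pi> \<Longrightarrow> transient_under P \<pi> s"
begin

abbreviation p where "p \<equiv> ptrans P"

lemma psum: "(\<Sum>s'\<in>UNIV. p s a s') = 1" using ptrans_sum[OF kern] .

lemma ple1: "p s a s' \<le> 1"
proof -
  have "p s a s' \<le> (\<Sum>s'\<in>UNIV. p s a s')"
    by (rule member_le_sum) (auto simp: ptrans_nonneg)
  then show ?thesis using psum by simp
qed

lemma reach_C:
  assumes pol: "is_policy \<pi>"
  shows "\<exists>u\<in>C. reachable_under P \<pi> s u"
proof (rule ccontr)
  assume nC: "\<not> (\<exists>u\<in>C. reachable_under P \<pi> s u)"
  let ?f = "\<lambda>u. card {w. reachable_under P \<pi> u w}"
  obtain u where u: "reachable_under P \<pi> s u" and umin: "\<And>w. reachable_under P \<pi> s w \<Longrightarrow> ?f u \<le> ?f w"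
    using ex_has_least_nat[of "reachable_under P \<pi> s" s ?f]
    by (auto simp: reachable_under_def)
  have "u \<notin> C" using u nC by auto
  then obtain w where w: "reachable_under P \<pi> u w" "\<not> reachable_under P \<pi> w u"
    using transC[OF _ pol] unfolding transient_under_def by blast
  have sw: "reachable_under P \<pi> s w" using u w unfolding reachable_under_def by auto
  have "{z. reachable_under P \<pi> w z} \<subset> {z. reachable_under P \<pi> u z}"
    using w unfolding reachable_under_def by auto
  then have "?f w < ?f u" by (intro psubset_card_mono) auto
  with umin[OF sw] show False by simp
qed

definition E where "E = {(u,u'). \<exists>a. p u a u' > 0}"

lemma policy_graph_E:
  assumes "is_policy \<pi>" shows "policy_graph P \<pi> \<subseteq> E"
proof
  fix x assume "x \<in> policy_graph P \<pi>"
  then obtain u u' where x: "x = (u,u')" and pos: "(\<Sum>a\<in>UNIV. \<pi> u a * p u a u') > 0"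
    unfolding policy_graph_def by auto
  have "\<exists>a. \<pi> u a * p u a u' > 0"
  proof (rule ccontr)
    assume "\<not> ?thesis"
    then have "(\<Sum>a\<in>UNIV. \<pi> u a * p u a u') \<le> 0" by (intro sum_nonpos) (auto simp: not_less)
    with pos show False by simp
  qed
  then obtain a where "\<pi> u a * p u a u' > 0" by blast
  moreover have "\<pi> u a \<ge> 0" using assms unfolding is_policy_def by auto
  ultimately have "p u a u' > 0" using ptrans_nonneg[of P u a u']
    by (metis less_eq_real_def mult_zero_right)
  then show "x \<in> E" unfolding E_def x by auto
qed

lemma reach_E:
  assumes "s' \<in> C" shows "(s, s') \<in> E\<^sup>*"
proof -
  define \<pi>0 where "\<pi>0 = (\<lambda>(u::'s) (a::'a). 1 / real CARD('a))"
  have pol0: "is_policy \<pi>0" unfolding is_policy_def \<pi>0_def by auto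
  obtain u where u: "u \<in> C" "reachable_under P \<pi>0 s u" using reach_C[OF pol0] by blast
  obtain \<pi> where pol: "is_policy \<pi>" "reachable_under P \<pi> u s'"
    using commC u(1) assms unfolding communicating_def by blast
  have "(s,u) \<in> E\<^sup>*" using u(2) rtrancl_mono[OF policy_graph_E[OF pol0]]
    unfolding reachable_under_def by blast
  moreover have "(u,s') \<in> E\<^sup>*" using pol rtrancl_mono[OF policy_graph_E[OF pol(1)]]
    unfolding reachable_under_def by blast
  ultimately show ?thesis by simp
qed

primrec Lset :: "'s \<Rightarrow> nat \<Rightarrow> 's set" where
  "Lset z 0 = {z}"
| "Lset z (Suc j) = Lset z j \<union> {s. \<exists>a s'. s' \<in> Lset z j \<and> p s a s' > 0}"

lemma Lset_mono: "j \<le> k \<Longrightarrow> Lset z j \<subseteq> Lset z k"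
  by (induction k) (auto simp: le_Suc_eq)

lemma Lset_ex:
  assumes "z \<in> C" shows "\<exists>j. s \<in> Lset z j"
proof -
  have "(s, z) \<in> E\<^sup>*" using reach_E[OF assms] .
  then show ?thesis
  proof (induction rule: converse_rtrancl_induct)
    case base
    then show ?case by (auto intro: exI[of _ 0])
  next
    case (step y w)
    then obtain j where "w \<in> Lset z j" by blast
    moreover obtain a where "p y a w > 0" using step(1) unfolding E_def by auto
    ultimately have "y \<in> Lset z (Suc j)" by auto
    then show ?case by blast
  qed
qed

lemma Lset_all: "\<exists>J. \<forall>z\<in>C. \<forall>s. s \<in> Lset z J"
proof -
  define g where "g = (\<lambda>(z,s). LEAST j. s \<in> Lset z j)"
  define J where "J = Max (range g)"
  have "s \<in> Lset z J" if "z \<in> C" for z s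
  proof -
    have "s \<in> Lset z (g (z,s))" unfolding g_def using Lset_ex[OF that, of s]
      by (auto intro: LeastI_ex)
    moreover have "g (z,s) \<le> J" unfolding J_def by (rule Max_ge) auto
    ultimately show ?thesis using Lset_mono by blast
  qed
  then show ?thesis by blast
qed

primrec Kset :: "nat \<Rightarrow> 's set" where
  "Kset 0 = C"
| "Kset (Suc j) = Kset j \<union> {s. \<forall>a. \<exists>s'\<in>Kset j. p s a s' > 0}"

lemma Kset_mono: "j \<le> k \<Longrightarrow> Kset j \<subseteq> Kset k"
  by (induction k) (auto simp: le_Suc_eq)

lemma Kset_ex: "\<exists>j. s \<in> Kset j"
proof (rule ccontr)
  assume s0: "\<not> (\<exists>j. s \<in> Kset j)"
  define K where "K = (\<Union>j. Kset j)"
  have "s \<notin> K" using s0 unfolding K_def by auto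
  have ex: "\<exists>a. \<forall>s'\<in>K. \<not> p u a s' > 0" if "u \<notin> K" for u
  proof (rule ccontr)
    assume "\<not> ?thesis"
    then have "\<forall>a. \<exists>s'\<in>K. p u a s' > 0" by blast
    then have "\<forall>a. \<exists>j. \<exists>s'\<in>Kset j. p u a s' > 0" unfolding K_def by blast
    then obtain jf where jf: "\<And>a. \<exists>s'\<in>Kset (jf a). p u a s' > 0" by metis
    define J where "J = Max (range jf)"
    have "\<exists>s'\<in>Kset J. p u a s' > 0" for a
    proof -
      from jf[of a] obtain s' where s': "s' \<in> Kset (jf a)" "p u a s' > 0" by blast
      moreover have "jf a \<le> J" unfolding J_def by (rule Max_ge) auto
      ultimately show ?thesis using Kset_mono by blast
    qed
    then have "u \<in> Kset (Suc J)" by simp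
    then have "u \<in> K" unfolding K_def by (rule UN_I[OF UNIV_I])
    then show False using that by simp
  qed
  define A where "A u = (SOME a. \<forall>s'\<in>K. \<not> p u a s' > 0)" for u
  have A0: "\<forall>s'\<in>K. \<not> p u (A u) s' > 0" if "u \<notin> K" for u
    unfolding A_def by (rule someI_ex[OF ex[OF that]])
  have A: "\<And>u s'. u \<notin> K \<Longrightarrow> s' \<in> K \<Longrightarrow> \<not> p u (A u) s' > 0"
    using A0 by blast
  define \<pi> where "\<pi> u a = (if a = A u then 1 else 0::real)" for u a
  have pol: "is_policy \<pi>" unfolding is_policy_def \<pi>_def by auto
  have "u \<notin> K" if "reachable_under P \<pi> s u" for u
    using that unfolding reachable_under_def
  proof (induction rule: rtrancl_induct)
    case base
    then show ?case by fact
  next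
    case (step y z)
    then have "(\<Sum>a\<in>UNIV. \<pi> y a * p y a z) > 0" unfolding policy_graph_def by auto
    moreover have "\<And>a. \<pi> y a * p y a z = (if a = A y then p y a z else 0)" by (simp add: \<pi>_def)
    ultimately have "p y (A y) z > 0" by simp
    then show ?case using A[OF step(3)] by blast
  qed
  moreover obtain u where "u \<in> C" "reachable_under P \<pi> s u" using reach_C[OF pol] by blast
  moreover have "C \<subseteq> K" unfolding K_def using Kset.simps(1) by blast
  ultimately show False by blast
qed

lemma Kset_all: "\<exists>J. \<forall>s. s \<in> Kset J"
proof -
  define g where "g = (\<lambda>s. LEAST j. s \<in> Kset j)"
  define J where "J = Max (range g)"
  have "s \<in> Kset J" for s
  proof -
    have "s \<in> Kset (g s)" unfolding g_def using Kset_ex[of s] by (auto intro: LeastI_ex)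
    moreover have "g s \<le> J" unfolding J_def by (rule Max_ge) auto
    ultimately show ?thesis using Kset_mono by blast
  qed
  then show ?thesis by blast
qed

end

context setting begin

definition \<beta> where "\<beta> s a = \<alpha> / tmean P s a"

lemma beta_pos: "0 < \<beta> s a" and beta_le1: "\<beta> s a \<le> 1"
proof -
  have t: "\<alpha> \<le> tmean P s a" "0 < \<alpha>" using tm alpha by auto
  then show "0 < \<beta> s a" unfolding \<beta>_def by auto
  show "\<beta> s a \<le> 1" unfolding \<beta>_def using t by auto
qed

definition vmax :: "real^('s \<times> 'a) \<Rightarrow> 's \<Rightarrow> real" where
  "vmax y s = (MAX a. y $ (s,a))"

definition F :: "real^('s \<times> 'a) \<Rightarrow> 's \<times> 'a \<Rightarrow> real" where
  "F y i = \<beta> (fst i) (snd i) * ((\<Sum>s'\<in>UNIV. p (fst i) (snd i) s' * vmax y s') - y $ i)"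

definition ysol :: "(real \<Rightarrow> real^('s \<times> 'a)) \<Rightarrow> bool" where
  "ysol y \<longleftrightarrow> (\<forall>i. continuous_on {0..} (\<lambda>t. y t $ i)) \<and>
     (\<forall>i t. 0 < t \<longrightarrow> ((\<lambda>t. y t $ i) has_real_derivative F (y t) i) (at t))"

lemma vmax_ge: "y $ (s,a) \<le> vmax y s"
  unfolding vmax_def by (rule Max_ge) auto

lemma vmax_le: "(\<And>a. y $ (s,a) \<le> b) \<Longrightarrow> vmax y s \<le> b"
  unfolding vmax_def by (subst Max_le_iff) auto

lemma sum_le:
  assumes "\<And>s'. p s a s' > 0 \<Longrightarrow> vmax y s' \<le> b"
  shows "(\<Sum>s'\<in>UNIV. p s a s' * vmax y s') \<le> b"
proof -
  have "(\<Sum>s'\<in>UNIV. p s a s' * vmax y s') \<le> (\<Sum>s'\<in>UNIV. p s a s' * b)"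
  proof (rule sum_mono)
    fix s' show "p s a s' * vmax y s' \<le> p s a s' * b"
    proof (cases "p s a s' > 0")
      case True then show ?thesis using assms[OF True] by (intro mult_left_mono) auto
    next
      case False then have "p s a s' = 0" using ptrans_nonneg[of P s a s'] by auto
      then show ?thesis by simp
    qed
  qed
  also have "\<dots> = b" using psum by (simp add: sum_distrib_right[symmetric])
  finally show ?thesis .
qed

lemma sum_ge:
  assumes "\<And>s'. vmax y s' \<ge> b"
  shows "(\<Sum>s'\<in>UNIV. p s a s' * vmax y s') \<ge> b"
proof -
  have "b = (\<Sum>s'\<in>UNIV. p s a s' * b)" using psum by (simp add: sum_distrib_right[symmetric])
  also have "\<dots> \<le> (\<Sum>s'\<in>UNIV. p s a s' * vmax y s')"
    using assms by (intro sum_mono mult_left_mono) (auto simp: ptrans_nonneg)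
  finally show ?thesis .
qed

lemma ysol_cont: "ysol y \<Longrightarrow> 0 \<le> t0 \<Longrightarrow> continuous_on {t0..} (\<lambda>t. y t $ i)"
proof -
  assume "ysol y" "0 \<le> t0"
  then have "continuous_on {0..} (\<lambda>t. y t $ i)" unfolding ysol_def by blast
  then show ?thesis by (rule continuous_on_subset) (use \<open>0 \<le> t0\<close> in auto)
qed

lemma ysol_cont2: "ysol y \<Longrightarrow> 0 \<le> t0 \<Longrightarrow> continuous_on {t0..t1} (\<lambda>t. y t $ i)"
  by (rule continuous_on_subset[OF ysol_cont]) auto

lemma ysol_der: "ysol y \<Longrightarrow> 0 < t \<Longrightarrow> ((\<lambda>t. y t $ i) has_real_derivative F (y t) i) (at t)"
  unfolding ysol_def by blast

lemma le_by_eps: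
  fixes x M c :: real
  assumes c: "c > 0" and h: "\<And>e. e > 0 \<Longrightarrow> x < M + e * c"
  shows "x \<le> M"
proof (rule ccontr)
  assume "\<not> x \<le> M"
  then have "(x - M) / (2*c) > 0" using c by auto
  from h[OF this] have "x < M + (x - M)/2" using c by (simp add: field_simps)
  with \<open>\<not> x \<le> M\<close> show False by (simp add: field_simps)
qed

lemma Y1up:
  assumes ys: "ysol y" and t0: "0 \<le> t0"
    and Scl: "\<And>s a s'. s \<in> S \<Longrightarrow> p s a s' > 0 \<Longrightarrow> s' \<in> S"
    and init: "\<And>s a. s \<in> S \<Longrightarrow> y t0 $ (s,a) \<le> M"
    and t: "t0 \<le> t" and s: "s \<in> S"
  shows "y t $ (s,a) \<le> M"
proof (rule le_by_eps[where c="1 + t - t0"])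
  show "0 < 1 + t - t0" using t by simp
  fix e :: real assume e: "e > 0"
  let ?I = "{i::'s\<times>'a. fst i \<in> S}"
  show "y t $ (s,a) < M + e * (1 + t - t0)"
  proof (rule barrier[of ?I t0 "\<lambda>i t. y t $ i" "\<lambda>t. M + e * (1 + t - t0)" "\<lambda>i t. F (y t) i" "\<lambda>t. e" "(s,a)" t])
    show "finite ?I" by simp
    show "continuous_on {t0..} (\<lambda>t. y t $ i)" for i using ysol_cont[OF ys t0] .
    show "continuous_on {t0..} (\<lambda>t. M + e * (1 + t - t0))" by (intro continuous_intros)
    show "((\<lambda>t. y t $ i) has_real_derivative F (y t') i) (at t')" if "t' > t0" for i t'
      using ysol_der[OF ys, of t' i] that t0 by auto
    show "((\<lambda>t. M + e * (1 + t - t0)) has_real_derivative e) (at t')" for t'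
      by (auto intro!: derivative_eq_intros)
    show "y t0 $ i < M + e * (1 + t0 - t0)" if "i \<in> ?I" for i
      using init[of "fst i" "snd i"] that e by auto
    show "(s,a) \<in> ?I" using s by simp
    show "t0 \<le> t" by fact
    fix i t' assume i: "i \<in> ?I" and t': "t0 < t'" and all: "\<forall>j\<in>?I. y t' $ j \<le> M + e * (1 + t' - t0)"
      and eq: "y t' $ i = M + e * (1 + t' - t0)"
    have "(\<Sum>s'\<in>UNIV. p (fst i) (snd i) s' * vmax (y t') s') \<le> M + e * (1 + t' - t0)"
    proof (rule sum_le)
      fix s' assume "p (fst i) (snd i) s' > 0"
      then have "s' \<in> S" using Scl i by auto
      then show "vmax (y t') s' \<le> M + e * (1 + t' - t0)" using all by (intro vmax_le) auto
    qed
    then have "F (y t') i \<le> 0" unfolding F_def using eq beta_pos[of "fst i" "snd i"]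
      by (intro mult_nonneg_nonpos) auto
    then show "F (y t') i < e" using e by simp
  qed
qed

lemma Y1lo:
  assumes ys: "ysol y" and t0: "0 \<le> t0"
    and init: "\<And>i. m \<le> y t0 $ i" and t: "t0 \<le> t"
  shows "m \<le> y t $ i"
proof -
  have "- (y t $ i) \<le> - m"
  proof (rule le_by_eps[where c="1 + t - t0"])
    show "0 < 1 + t - t0" using t by simp
    fix e :: real assume e: "e > 0"
    show "- (y t $ i) < - m + e * (1 + t - t0)"
    proof (rule barrier[of UNIV t0 "\<lambda>i t. - (y t $ i)" "\<lambda>t. - m + e * (1 + t - t0)" "\<lambda>i t. - F (y t) i" "\<lambda>t. e" i t])
      show "finite (UNIV :: ('s \<times> 'a) set)" by simp
      show "continuous_on {t0..} (\<lambda>t. - (y t $ i))" for i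
        by (rule continuous_on_minus[OF ysol_cont[OF ys t0]])
      show "continuous_on {t0..} (\<lambda>t. - m + e * (1 + t - t0))" by (intro continuous_intros)
      show "((\<lambda>t. - (y t $ i)) has_real_derivative - F (y t') i) (at t')" if "t' > t0" for i t'
        using ysol_der[OF ys, of t' i] that t0 by (auto intro!: derivative_eq_intros)
      show "((\<lambda>t. - m + e * (1 + t - t0)) has_real_derivative e) (at t')" for t'
        by (auto intro!: derivative_eq_intros)
      show "- (y t0 $ i) < - m + e * (1 + t0 - t0)" for i
        using init[of i] e by auto
      show "i \<in> UNIV" by simp
      show "t0 \<le> t" by fact
      fix j t' assume t': "t0 < t'" and all: "\<forall>j\<in>UNIV. - (y t' $ j) \<le> - m + e * (1 + t' - t0)"
        and eq: "- (y t' $ j) = - m + e * (1 + t' - t0)"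
      have "(\<Sum>s'\<in>UNIV. p (fst j) (snd j) s' * vmax (y t') s') \<ge> m - e * (1 + t' - t0)"
      proof (rule sum_ge)
        fix s'
        have "- (y t' $ (s', undefined)) \<le> - m + e * (1 + t' - t0)" using all by blast
        then have "m - e * (1 + t' - t0) \<le> y t' $ (s', undefined)" by simp
        also have "\<dots> \<le> vmax (y t') s'" by (rule vmax_ge)
        finally show "m - e * (1 + t' - t0) \<le> vmax (y t') s'" .
      qed
      then have "F (y t') j \<ge> 0" unfolding F_def using eq beta_pos[of "fst j" "snd j"]
        by (intro mult_nonneg_nonneg) auto
      then show "- F (y t') j < e" using e by simp
    qed
  qed
  then show ?thesis by simp
qed

end

context setting begin

definition pmin where
  "pmin = Min ((\<lambda>(s,a,s'). p s a s') ` {x. case x of (s,a,s') \<Rightarrow> p s a s' > 0})"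

lemma pex: "\<exists>x. case x of (s,a,s') \<Rightarrow> p s a s' > 0"
proof (rule ccontr)
  assume "\<not> ?thesis"
  then have "\<And>s'. \<not> (case (undefined::'s, undefined::'a, s') of (s,a,s') \<Rightarrow> p s a s' > 0)" by blast
  then have "\<And>s'. p undefined undefined s' \<le> 0" by (simp add: not_less)
  then have "(\<Sum>s'\<in>UNIV. p undefined undefined s') \<le> 0" by (intro sum_nonpos) auto
  then show False using psum by simp
qed

lemma pmin_le: "p s a s' > 0 \<Longrightarrow> pmin \<le> p s a s'"
  unfolding pmin_def by (rule Min_le) (auto intro!: image_eqI[of _ _ "(s,a,s')"])

lemma pmin_pos: "0 < pmin"
  unfolding pmin_def using pex by (subst Min_gr_iff) auto

lemma pmin_le1: "pmin \<le> 1"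
proof -
  obtain s a s' where "p s a s' > 0" using pex by auto
  then show ?thesis using pmin_le ple1 by (meson order_trans)
qed

definition bmin where "bmin = Min (range (\<lambda>(s,a). \<beta> s a))"

lemma bmin_le: "bmin \<le> \<beta> s a"
  unfolding bmin_def by (rule Min_le) (auto intro!: image_eqI[of _ _ "(s,a)"])

lemma bmin_pos: "0 < bmin"
  unfolding bmin_def using beta_pos by (subst Min_gr_iff) auto

definition \<theta> where "\<theta> = pmin * (1 - exp (- bmin))"

lemma ebm: "0 < 1 - exp (- bmin)" "1 - exp (- bmin) \<le> 1"
  using bmin_pos by auto

lemma theta_pos: "0 < \<theta>" and theta_le1: "\<theta> \<le> 1"
  unfolding \<theta>_def using pmin_pos pmin_le1 ebm by (auto intro: mult_le_one)

lemma lift_lo: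
  assumes ys: "ysol y" and t1: "0 \<le> t1" and tt: "t1 + 1 \<le> t" "t \<le> t2"
    and lo: "\<And>t. t1 \<le> t \<Longrightarrow> t \<le> t2 \<Longrightarrow> m \<le> y t $ i"
    and hyp: "\<And>t. t1 \<le> t \<Longrightarrow> t \<le> t2 \<Longrightarrow> A \<le> (\<Sum>s'\<in>UNIV. p (fst i) (snd i) s' * vmax (y t) s')"
    and Am: "m \<le> A"
  shows "m + (A - m) * (1 - exp (- bmin)) \<le> y t $ i"
proof -
  let ?b = "\<beta> (fst i) (snd i)"
  have "A + exp (- ?b * (t - t1)) * (y t1 $ i - A) \<le> y t $ i"
  proof (rule exp_cmp_lower[of t1 t t2 "\<lambda>t. y t $ i" "\<lambda>t. F (y t) i"])
    show "t1 \<le> t" "t \<le> t2" using tt by auto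
    show "continuous_on {t1..t2} (\<lambda>t. y t $ i)" by (rule ysol_cont2[OF ys t1])
    show "((\<lambda>t. y t $ i) has_real_derivative F (y s) i) (at s)" if "t1 < s" "s < t2" for s
      using ysol_der[OF ys] that t1 by auto
    show "?b * (A - y s $ i) \<le> F (y s) i" if "t1 < s" "s < t2" for s
      unfolding F_def using hyp[of s] that beta_pos[of "fst i" "snd i"]
      by (intro mult_left_mono) auto
  qed
  moreover have "exp (- ?b * (t - t1)) * (y t1 $ i - A) \<ge> exp (- bmin) * (m - A)"
  proof -
    have "y t1 $ i - A \<ge> m - A" using lo[of t1] tt by auto
    then have "exp (- ?b * (t - t1)) * (y t1 $ i - A) \<ge> exp (- ?b * (t - t1)) * (m - A)"
      by (intro mult_left_mono) auto
    moreover have "exp (- ?b * (t - t1)) \<le> exp (- bmin)"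
    proof -
      have "bmin \<le> ?b" by (rule bmin_le)
      also have "?b \<le> ?b * (t - t1)" using tt beta_pos[of "fst i" "snd i"]
        by (intro mult_le_cancel_left1[THEN iffD2]) auto
      finally show ?thesis by simp
    qed
    then have "exp (- ?b * (t - t1)) * (m - A) \<ge> exp (- bmin) * (m - A)"
      using Am by (intro mult_right_mono_neg) auto
    ultimately show ?thesis by linarith
  qed
  ultimately show ?thesis by (simp add: algebra_simps)
qed

lemma lift_up:
  assumes ys: "ysol y" and t1: "0 \<le> t1" and tt: "t1 + 1 \<le> t" "t \<le> t2"
    and hi: "\<And>t. t1 \<le> t \<Longrightarrow> t \<le> t2 \<Longrightarrow> y t $ i \<le> M"
    and hyp: "\<And>t. t1 \<le> t \<Longrightarrow> t \<le> t2 \<Longrightarrow> (\<Sum>s'\<in>UNIV. p (fst i) (snd i) s' * vmax (y t) s') \<le> A"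
    and AM: "A \<le> M"
  shows "y t $ i \<le> M - (M - A) * (1 - exp (- bmin))"
proof -
  let ?b = "\<beta> (fst i) (snd i)"
  have "y t $ i \<le> A + exp (- ?b * (t - t1)) * (y t1 $ i - A)"
  proof (rule exp_cmp_upper[of t1 t t2 "\<lambda>t. y t $ i" "\<lambda>t. F (y t) i"])
    show "t1 \<le> t" "t \<le> t2" using tt by auto
    show "continuous_on {t1..t2} (\<lambda>t. y t $ i)" by (rule ysol_cont2[OF ys t1])
    show "((\<lambda>t. y t $ i) has_real_derivative F (y s) i) (at s)" if "t1 < s" "s < t2" for s
      using ysol_der[OF ys] that t1 by auto
    show "F (y s) i \<le> ?b * (A - y s $ i)" if "t1 < s" "s < t2" for s
      unfolding F_def using hyp[of s] that beta_pos[of "fst i" "snd i"]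
      by (intro mult_left_mono) auto
  qed
  moreover have "exp (- ?b * (t - t1)) * (y t1 $ i - A) \<le> exp (- bmin) * (M - A)"
  proof -
    have "y t1 $ i - A \<le> M - A" using hi[of t1] tt by auto
    then have "exp (- ?b * (t - t1)) * (y t1 $ i - A) \<le> exp (- ?b * (t - t1)) * (M - A)"
      by (intro mult_left_mono) auto
    moreover have "exp (- ?b * (t - t1)) \<le> exp (- bmin)"
    proof -
      have "bmin \<le> ?b" by (rule bmin_le)
      also have "?b \<le> ?b * (t - t1)" using tt beta_pos[of "fst i" "snd i"]
        by (intro mult_le_cancel_left1[THEN iffD2]) auto
      finally show ?thesis by simp
    qed
    then have "exp (- ?b * (t - t1)) * (M - A) \<le> exp (- bmin) * (M - A)"
      using AM by (intro mult_right_mono) auto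
    ultimately show ?thesis by linarith
  qed
  ultimately show ?thesis by (simp add: algebra_simps)
qed

lemma sum_single_lo:
  assumes "\<And>s''. m \<le> vmax y s''"
  shows "m + p s a s' * (vmax y s' - m) \<le> (\<Sum>s''\<in>UNIV. p s a s'' * vmax y s'')"
proof -
  have "(\<Sum>s''\<in>UNIV. p s a s'' * vmax y s'') = m + (\<Sum>s''\<in>UNIV. p s a s'' * (vmax y s'' - m))"
    using psum[of s a] sum_distrib_left[of m "p s a" UNIV, symmetric] by (simp add: algebra_simps sum_subtractf)
  moreover have "p s a s' * (vmax y s' - m) \<le> (\<Sum>s''\<in>UNIV. p s a s'' * (vmax y s'' - m))"
    by (rule member_le_sum) (use assms in \<open>auto simp: ptrans_nonneg\<close>)
  ultimately show ?thesis by simp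
qed

lemma sum_single_up:
  assumes "\<And>s''. vmax y s'' \<le> M"
  shows "(\<Sum>s''\<in>UNIV. p s a s'' * vmax y s'') \<le> M - p s a s' * (M - vmax y s')"
proof -
  have "(\<Sum>s''\<in>UNIV. p s a s'' * vmax y s'') = M - (\<Sum>s''\<in>UNIV. p s a s'' * (M - vmax y s''))"
    using psum[of s a] sum_distrib_left[of M "p s a" UNIV, symmetric] by (simp add: algebra_simps sum_subtractf)
  moreover have "p s a s' * (M - vmax y s') \<le> (\<Sum>s''\<in>UNIV. p s a s'' * (M - vmax y s''))"
    by (rule member_le_sum) (use assms in \<open>auto simp: ptrans_nonneg\<close>)
  ultimately show ?thesis by simp
qed

end

context setting begin

definition JL where "JL = (SOME J. \<forall>z\<in>C. \<forall>s. s \<in> Lset z J)"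
definition JK where "JK = (SOME J. \<forall>s. s \<in> Kset J)"

lemma JL: "z \<in> C \<Longrightarrow> s \<in> Lset z JL"
  using someI_ex[OF Lset_all] unfolding JL_def by blast

lemma JK: "s \<in> Kset JK"
  using someI_ex[OF Kset_all] unfolding JK_def by blast

lemma vlo_from: "(\<And>i. m \<le> y $ i) \<Longrightarrow> m \<le> vmax y s"
  using vmax_ge[of y s undefined] order_trans by blast

lemma vhi_from: "(\<And>i. y $ i \<le> M) \<Longrightarrow> vmax y s \<le> M"
  by (rule vmax_le) auto

lemma caseA:
  assumes ys: "ysol y" and t0: "0 \<le> t0" and lo0: "\<And>i. m \<le> y t0 $ i"
    and z: "z \<in> C" and hz: "m + D/2 \<le> y t0 $ (z,az)" and D: "0 \<le> D"
  shows "m + exp (- (real JL + 1)) / 2 * \<theta> ^ JL * (1 - exp (- bmin)) * D \<le> y (t0 + real JL + 1) $ i"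
proof -
  define H where "H = real JL + 1"
  define l0 where "l0 = exp (- H) / 2"
  have l0: "0 \<le> l0" unfolding l0_def by simp
  have lo: "\<And>t i. t0 \<le> t \<Longrightarrow> m \<le> y t $ i" using Y1lo[OF ys t0 lo0] by blast
  have vlo: "\<And>t s. t0 \<le> t \<Longrightarrow> m \<le> vmax (y t) s" using lo vlo_from by blast
  have a1: "m + l0 * D \<le> y t $ (z,az)" if t: "t0 \<le> t" "t \<le> t0 + H" for t
  proof -
    let ?b = "\<beta> z az"
    have "m + exp (- ?b * (t - t0)) * (y t0 $ (z,az) - m) \<le> y t $ (z,az)"
    proof (rule exp_cmp_lower[of t0 t "t0 + H" "\<lambda>t. y t $ (z,az)" "\<lambda>t. F (y t) (z,az)"])
      show "t0 \<le> t" "t \<le> t0 + H" using t by auto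
      show "continuous_on {t0..t0 + H} (\<lambda>t. y t $ (z,az))" by (rule ysol_cont2[OF ys t0])
      show "((\<lambda>t. y t $ (z,az)) has_real_derivative F (y s) (z,az)) (at s)" if "t0 < s" "s < t0 + H" for s
        using ysol_der[OF ys] that t0 by auto
      show "?b * (m - y s $ (z,az)) \<le> F (y s) (z,az)" if "t0 < s" "s < t0 + H" for s
      proof -
        have "m \<le> (\<Sum>s'\<in>UNIV. p z az s' * vmax (y s) s')"
          using sum_ge[of m "y s" z az] vlo[of s] that by auto
        then show ?thesis unfolding F_def using beta_pos[of z az] by (auto intro!: mult_left_mono)
      qed
    qed
    moreover have "exp (- ?b * (t - t0)) \<ge> exp (- H)"
    proof -
      have "?b * (t - t0) \<le> 1 * (t - t0)" using beta_le1[of z az] t by (intro mult_right_mono) auto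
      then show ?thesis using t by simp
    qed
    moreover have "y t0 $ (z,az) - m \<ge> D/2" using hz by simp
    ultimately have "exp (- H) * (D/2) \<le> exp (- ?b * (t - t0)) * (y t0 $ (z,az) - m)"
      using D by (intro mult_mono) auto
    with \<open>m + exp (- ?b * (t - t0)) * (y t0 $ (z,az) - m) \<le> y t $ (z,az)\<close>
    have "m + exp (- H) * (D/2) \<le> y t $ (z,az)" by linarith
    then show ?thesis unfolding l0_def by simp
  qed
  have a2: "\<forall>s\<in>Lset z j. \<forall>t. t0 + real j \<le> t \<longrightarrow> t \<le> t0 + H \<longrightarrow> m + l0 * \<theta> ^ j * D \<le> vmax (y t) s"
    if "j \<le> JL" for j
    using that
  proof (induction j)
    case 0
    show ?case using a1 vmax_ge[of _ z az] by (auto intro: order_trans)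
  next
    case (Suc j)
    then have IH: "\<forall>s\<in>Lset z j. \<forall>t. t0 + real j \<le> t \<longrightarrow> t \<le> t0 + H \<longrightarrow> m + l0 * \<theta> ^ j * D \<le> vmax (y t) s"
      by simp
    show ?case
    proof (intro ballI allI impI)
      fix s t assume s: "s \<in> Lset z (Suc j)" and t: "t0 + real (Suc j) \<le> t" "t \<le> t0 + H"
      have pd: "\<theta> ^ Suc j \<le> \<theta> ^ j"
        by (rule power_decreasing[of j "Suc j" \<theta>]) (use theta_pos theta_le1 in auto)
      have mono: "l0 * \<theta> ^ Suc j * D \<le> l0 * \<theta> ^ j * D"
        using mult_right_mono[OF mult_left_mono[OF pd l0] D] .
      show "m + l0 * \<theta> ^ Suc j * D \<le> vmax (y t) s"
      proof (cases "s \<in> Lset z j")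
        case True
        then have "m + l0 * \<theta> ^ j * D \<le> vmax (y t) s" using IH t by auto
        then show ?thesis using mono by linarith
      next
        case False
        then obtain a s' where s': "s' \<in> Lset z j" "p s a s' > 0" using s by auto
        let ?A = "m + pmin * (l0 * \<theta> ^ j * D)"
        have X: "m + pmin * (l0 * \<theta> ^ j * D) * (1 - exp (- bmin)) \<le> y t $ (s,a)"
        proof -
          have "m + (?A - m) * (1 - exp (- bmin)) \<le> y t $ (s,a)"
          proof (rule lift_lo[of y "t0 + real j" t "t0 + H" m "(s,a)"])
            show "ysol y" by fact
            show "0 \<le> t0 + real j" using t0 by simp
            show "t0 + real j + 1 \<le> t" "t \<le> t0 + H" using t by auto
            show "m \<le> y t' $ (s,a)" if "t0 + real j \<le> t'" for t' using lo that by simp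
            show "m \<le> ?A" using pmin_pos l0 D theta_pos by simp
            fix t' assume t': "t0 + real j \<le> t'" "t' \<le> t0 + H"
            have v: "m + l0 * \<theta> ^ j * D \<le> vmax (y t') s'" using IH s' t' by auto
            have "pmin * (l0 * \<theta> ^ j * D) \<le> p s a s' * (vmax (y t') s' - m)"
            proof (rule mult_mono)
              show "pmin \<le> p s a s'" by (rule pmin_le[OF s'(2)])
              show "l0 * \<theta> ^ j * D \<le> vmax (y t') s' - m" using v by simp
              show "0 \<le> p s a s'" by (rule ptrans_nonneg)
              show "0 \<le> l0 * \<theta> ^ j * D" using l0 D theta_pos by simp
            qed
            then show "?A \<le> (\<Sum>s''\<in>UNIV. p (fst (s,a)) (snd (s,a)) s'' * vmax (y t') s'')"
              using sum_single_lo[of m "y t'" s a s'] vlo[of t'] t' t0 by simp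
          qed
          then show ?thesis by simp
        qed
        have "l0 * \<theta> ^ Suc j * D = pmin * (l0 * \<theta> ^ j * D) * (1 - exp (- bmin))"
          unfolding \<theta>_def by (simp add: algebra_simps)
        then show ?thesis using X vmax_ge[of "y t" s a] by linarith
      qed
    qed
  qed
  have vall: "m + l0 * \<theta> ^ JL * D \<le> vmax (y t) s" if "t0 + real JL \<le> t" "t \<le> t0 + H" for t s
    using a2[OF order_refl] JL[OF z] that by blast
  let ?A = "m + l0 * \<theta> ^ JL * D"
  have "m + (?A - m) * (1 - exp (- bmin)) \<le> y (t0 + H) $ i"
  proof (rule lift_lo[of y "t0 + real JL" "t0 + H" "t0 + H" m i])
    show "ysol y" by fact
    show "0 \<le> t0 + real JL" using t0 by simp
    show "t0 + real JL + 1 \<le> t0 + H" "t0 + H \<le> t0 + H" unfolding H_def by auto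
    show "m \<le> y t' $ i" if "t0 + real JL \<le> t'" for t' using lo that by simp
    show "m \<le> ?A" using l0 D theta_pos by simp
    fix t' assume t': "t0 + real JL \<le> t'" "t' \<le> t0 + H"
    show "?A \<le> (\<Sum>s''\<in>UNIV. p (fst i) (snd i) s'' * vmax (y t') s'')"
      by (rule sum_ge) (use vall t' in auto)
  qed
  then show ?thesis unfolding H_def l0_def by (simp add: algebra_simps)
qed

lemma caseB:
  assumes ys: "ysol y" and t0: "0 \<le> t0" and hi0: "\<And>i. y t0 $ i \<le> M"
    and hC: "\<And>s a. s \<in> C \<Longrightarrow> y t0 $ (s,a) \<le> M - D/2" and D: "0 \<le> D"
  shows "y (t0 + real JK) $ i \<le> M - \<theta> ^ JK / 2 * D"
proof -
  have hi: "\<And>t s a. t0 \<le> t \<Longrightarrow> y t $ (s,a) \<le> M"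
    using Y1up[OF ys t0, of UNIV M] hi0 by auto
  have hi': "y t $ i \<le> M" if "t0 \<le> t" for t i using hi[OF that, of "fst i" "snd i"] by simp
  have vhi: "\<And>t s. t0 \<le> t \<Longrightarrow> vmax (y t) s \<le> M" using hi' vhi_from by blast
  have hiC: "\<And>t s a. t0 \<le> t \<Longrightarrow> s \<in> C \<Longrightarrow> y t $ (s,a) \<le> M - D/2"
  proof -
    fix t s a assume "t0 \<le> t" "s \<in> C"
    show "y t $ (s,a) \<le> M - D/2"
    proof (rule Y1up[OF ys t0, of C])
      show "\<And>s a s'. s \<in> C \<Longrightarrow> 0 < p s a s' \<Longrightarrow> s' \<in> C"
        using closedC unfolding closed_set_def by blast
    qed (use hC \<open>t0 \<le> t\<close> \<open>s \<in> C\<close> in auto)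
  qed
  have b2: "\<forall>s\<in>Kset j. \<forall>a t. t0 + real j \<le> t \<longrightarrow> y t $ (s,a) \<le> M - \<theta> ^ j / 2 * D" for j
  proof (induction j)
    case 0
    then show ?case using hiC by simp
  next
    case (Suc j)
    show ?case
    proof (intro ballI allI impI)
      fix s a t assume s: "s \<in> Kset (Suc j)" and t: "t0 + real (Suc j) \<le> t"
      have pd: "\<theta> ^ Suc j \<le> \<theta> ^ j"
        by (rule power_decreasing[of j "Suc j" \<theta>]) (use theta_pos theta_le1 in auto)
      have mono: "\<theta> ^ Suc j / 2 * D \<le> \<theta> ^ j / 2 * D"
        using mult_right_mono[OF pd D] by simp
      show "y t $ (s,a) \<le> M - \<theta> ^ Suc j / 2 * D"
      proof (cases "s \<in> Kset j")
        case True
        then have "y t $ (s,a) \<le> M - \<theta> ^ j / 2 * D" using Suc t by auto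
        then show ?thesis using mono by linarith
      next
        case False
        then obtain s' where s': "s' \<in> Kset j" "p s a s' > 0" using s by auto
        let ?A = "M - pmin * (\<theta> ^ j / 2 * D)"
        have "y t $ (s,a) \<le> M - (M - ?A) * (1 - exp (- bmin))"
        proof (rule lift_up[of y "t0 + real j" t t])
          show "ysol y" by fact
          show "0 \<le> t0 + real j" using t0 by simp
          show "t0 + real j + 1 \<le> t" "t \<le> t" using t by auto
          show "y t' $ (s,a) \<le> M" if "t0 + real j \<le> t'" for t' using hi that by simp
          show "?A \<le> M" using pmin_pos D theta_pos by simp
          fix t' assume t': "t0 + real j \<le> t'" "t' \<le> t"
          have v: "vmax (y t') s' \<le> M - \<theta> ^ j / 2 * D"
            using Suc s' t' by (intro vmax_le) auto
          have "pmin * (\<theta> ^ j / 2 * D) \<le> p s a s' * (M - vmax (y t') s')"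
          proof (rule mult_mono)
            show "pmin \<le> p s a s'" by (rule pmin_le[OF s'(2)])
            show "\<theta> ^ j / 2 * D \<le> M - vmax (y t') s'" using v by simp
            show "0 \<le> p s a s'" by (rule ptrans_nonneg)
            show "0 \<le> \<theta> ^ j / 2 * D" using D theta_pos by simp
          qed
          then show "(\<Sum>s''\<in>UNIV. p (fst (s,a)) (snd (s,a)) s'' * vmax (y t') s'') \<le> ?A"
            using sum_single_up[of "y t'" M s a s'] vhi[of t'] t' t0 by simp
        qed
        moreover have "M - (M - ?A) * (1 - exp (- bmin)) = M - \<theta> ^ Suc j / 2 * D"
          unfolding \<theta>_def by (simp add: algebra_simps)
        ultimately show ?thesis by linarith
      qed
    qed
  qed
  have "y (t0 + real JK) $ (fst i, snd i) \<le> M - \<theta> ^ JK / 2 * D"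
    using b2[of JK] JK[of "fst i"] by blast
  then show ?thesis by simp
qed

definition \<tau> where "\<tau> = max (real JL + 1) (real JK)"
definition \<eta> where "\<eta> = min (exp (- (real JL + 1)) / 2 * \<theta> ^ JL * (1 - exp (- bmin))) (\<theta> ^ JK / 2)"

lemma eta_pos: "0 < \<eta>" and eta_le: "\<eta> \<le> 1/2" and tau_ge: "1 \<le> \<tau>"
proof -
  show "0 < \<eta>" unfolding \<eta>_def using theta_pos ebm by auto
  have "\<theta> ^ JK \<le> 1" using theta_pos theta_le1 by (simp add: power_le_one)
  then show "\<eta> \<le> 1/2" unfolding \<eta>_def by auto
  show "1 \<le> \<tau>" unfolding \<tau>_def by auto
qed

lemma contract:
  assumes ys: "ysol y" and t0: "0 \<le> t0" and lo0: "\<And>i. m \<le> y t0 $ i" and hi0: "\<And>i. y t0 $ i \<le> M"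
  shows "(\<forall>i. m + \<eta> * (M - m) \<le> y (t0 + \<tau>) $ i) \<or> (\<forall>i. y (t0 + \<tau>) $ i \<le> M - \<eta> * (M - m))"
proof -
  define D where "D = M - m"
  have D: "0 \<le> D" using lo0[of undefined] hi0[of undefined] unfolding D_def by simp
  show ?thesis
  proof (cases "\<exists>z\<in>C. \<exists>a. m + D/2 \<le> y t0 $ (z,a)")
    case True
    then obtain z a where z: "z \<in> C" "m + D/2 \<le> y t0 $ (z,a)" by blast
    have A: "m + exp (- (real JL + 1)) / 2 * \<theta> ^ JL * (1 - exp (- bmin)) * D \<le> y (t0 + real JL + 1) $ i" for i
      by (rule caseA[OF ys t0 lo0 z D])
    have e1: "\<eta> \<le> exp (- (real JL + 1)) / 2 * \<theta> ^ JL * (1 - exp (- bmin))"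
      unfolding \<eta>_def by (rule min.cobounded1)
    have "m + \<eta> * D \<le> exp (- (real JL + 1)) / 2 * \<theta> ^ JL * (1 - exp (- bmin)) * D + m"
      using mult_right_mono[OF e1 D] by linarith
    then have A': "m + \<eta> * D \<le> y (t0 + real JL + 1) $ i" for i using A[of i] by linarith
    have "m + \<eta> * D \<le> y (t0 + \<tau>) $ i" for i
    proof (rule Y1lo[OF ys _ A'])
      show "0 \<le> t0 + real JL + 1" using t0 by simp
      show "t0 + real JL + 1 \<le> t0 + \<tau>" unfolding \<tau>_def by simp
    qed
    then show ?thesis unfolding D_def by blast
  next
    case False
    have hC: "y t0 $ (s,a) \<le> M - D/2" if "s \<in> C" for s a
    proof -
      have "\<not> m + D/2 \<le> y t0 $ (s,a)" using False that by blast
      moreover have "m + D/2 = M - D/2" unfolding D_def by (simp add: field_simps)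
      ultimately show ?thesis by linarith
    qed
    have B: "y (t0 + real JK) $ i \<le> M - \<theta> ^ JK / 2 * D" for i
      by (rule caseB[OF ys t0 hi0 hC D])
    have e2: "\<eta> \<le> \<theta> ^ JK / 2" unfolding \<eta>_def by (rule min.cobounded2)
    have "\<eta> * D \<le> \<theta> ^ JK / 2 * D" using mult_right_mono[OF e2 D] .
    then have B': "y (t0 + real JK) $ i \<le> M - \<eta> * D" for i using B[of i] by linarith
    have Bs: "y (t0 + \<tau>) $ (s,a) \<le> M - \<eta> * D" for s a
    proof (rule Y1up[of y "t0 + real JK" UNIV])
      show "ysol y" by fact
      show "0 \<le> t0 + real JK" using t0 by simp
      show "t0 + real JK \<le> t0 + \<tau>" unfolding \<tau>_def by simp
      show "y (t0 + real JK) $ (s', a') \<le> M - \<eta> * D" for s' a' by (rule B')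
    qed auto
    have "y (t0 + \<tau>) $ i \<le> M - \<eta> * D" for i using Bs[of "fst i" "snd i"] by simp
    then show ?thesis unfolding D_def by blast
  qed
qed

end

context setting begin

lemma Y1up_all:
  assumes ys: "ysol y" and t0: "0 \<le> t0" and init: "\<And>i. y t0 $ i \<le> M" and t: "t0 \<le> t"
  shows "y t $ i \<le> M"
proof -
  have "y t $ (fst i, snd i) \<le> M"
    by (rule Y1up[OF ys t0, of UNIV]) (use init t in auto)
  then show ?thesis by simp
qed

lemma ysol_conv:
  assumes ys: "ysol y"
  shows "\<exists>c. \<forall>i. ((\<lambda>t. y t $ i) \<longlongrightarrow> c) at_top"
proof -
  define Mx where "Mx t = Max (range (\<lambda>i. y t $ i))" for t
  define mn where "mn t = Min (range (\<lambda>i. y t $ i))" for t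
  have Mx_ge: "y t $ i \<le> Mx t" for t i unfolding Mx_def by (rule Max_ge) auto
  have mn_le: "mn t \<le> y t $ i" for t i unfolding mn_def by (rule Min_le) auto
  have Mx_le: "Mx t \<le> b" if "\<And>i. y t $ i \<le> b" for t b
    unfolding Mx_def using that by (subst Max_le_iff) auto
  have mn_ge: "b \<le> mn t" if "\<And>i. b \<le> y t $ i" for t b
    unfolding mn_def using that by (subst Min_ge_iff) auto
  have mono_up: "y t $ i \<le> Mx t'" if "0 \<le> t'" "t' \<le> t" for t t' i
    using Y1up_all[OF ys that(1) Mx_ge that(2)] .
  have mono_lo: "mn t' \<le> y t $ i" if "0 \<le> t'" "t' \<le> t" for t t' i
    using Y1lo[OF ys that(1) mn_le that(2)] .
  define T where "T k = real k * \<tau>" for k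
  have tau0: "0 \<le> \<tau>" using tau_ge by simp
  have T0: "0 \<le> T k" for k unfolding T_def using tau_ge by simp
  have TS: "T (Suc k) = T k + \<tau>" for k unfolding T_def by (simp add: algebra_simps)
  define D0 where "D0 = Mx 0 - mn 0"
  have span: "Mx (T k) - mn (T k) \<le> (1 - \<eta>) ^ k * D0" for k
  proof (induction k)
    case 0
    then show ?case unfolding D0_def T_def by simp
  next
    case (Suc k)
    let ?m = "mn (T k)" and ?M = "Mx (T k)"
    have up: "Mx (T (Suc k)) \<le> ?M" by (rule Mx_le) (rule mono_up, rule T0, simp add: TS tau0)
    have lo: "?m \<le> mn (T (Suc k))" by (rule mn_ge) (rule mono_lo, rule T0, simp add: TS tau0)
    have "Mx (T (Suc k)) - mn (T (Suc k)) \<le> (1 - \<eta>) * (?M - ?m)"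
    proof -
      from contract[OF ys T0 mn_le Mx_ge, of k]
      have "(\<forall>i. ?m + \<eta> * (?M - ?m) \<le> y (T (Suc k)) $ i) \<or> (\<forall>i. y (T (Suc k)) $ i \<le> ?M - \<eta> * (?M - ?m))"
        by (simp add: TS)
      then show ?thesis
      proof
        assume "\<forall>i. ?m + \<eta> * (?M - ?m) \<le> y (T (Suc k)) $ i"
        then have "?m + \<eta> * (?M - ?m) \<le> mn (T (Suc k))" by (intro mn_ge) auto
        then show ?thesis using up by (simp add: algebra_simps)
      next
        assume "\<forall>i. y (T (Suc k)) $ i \<le> ?M - \<eta> * (?M - ?m)"
        then have "Mx (T (Suc k)) \<le> ?M - \<eta> * (?M - ?m)" by (intro Mx_le) auto
        then show ?thesis using lo by (simp add: algebra_simps)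
      qed
    qed
    also have "\<dots> \<le> (1 - \<eta>) * ((1 - \<eta>) ^ k * D0)"
      using Suc eta_le by (intro mult_left_mono) auto
    finally show ?case by simp
  qed
  define c where "c = (INF k. Mx (T k))"
  have bdd: "bdd_below (range (\<lambda>k. Mx (T k)))"
    by (rule bdd_belowI[of _ "mn 0"]) (auto intro: order_trans[OF mono_lo[OF order_refl T0] Mx_ge])
  have c_le: "c \<le> Mx (T k)" for k unfolding c_def by (rule cINF_lower[OF bdd]) simp
  have c_ge: "mn (T k) \<le> c" for k
    unfolding c_def
  proof (rule cINF_greatest)
    fix k' :: nat assume "k' \<in> UNIV"
    let ?t = "max (T k) (T k')"
    have "mn (T k) \<le> y ?t $ undefined" by (rule mono_lo) (auto simp: T0)
    also have "\<dots> \<le> Mx (T k')" by (rule mono_up) (auto simp: T0)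
    finally show "mn (T k) \<le> Mx (T k')" .
  qed simp
  have close: "\<bar>y t $ i - c\<bar> \<le> (1 - \<eta>) ^ k * D0" if "T k \<le> t" for t i k
  proof -
    have "mn (T k) \<le> y t $ i" "y t $ i \<le> Mx (T k)"
      using mono_lo[OF T0 that] mono_up[OF T0 that] by auto
    then have "\<bar>y t $ i - c\<bar> \<le> Mx (T k) - mn (T k)" using c_le[of k] c_ge[of k] by auto
    then show ?thesis using span[of k] by simp
  qed
  have lim0: "(\<lambda>k. (1 - \<eta>) ^ k * D0) \<longlonglongrightarrow> 0"
    by (rule tendsto_mult_left_zero, rule LIMSEQ_power_zero) (use eta_pos eta_le in auto)
  have "((\<lambda>t. y t $ i) \<longlongrightarrow> c) at_top" for i
  proof (rule tendstoI)
    fix e :: real assume e: "e > 0"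
    from order_tendstoD(2)[OF lim0 e] obtain k where k: "(1 - \<eta>) ^ k * D0 < e"
      by (auto simp: eventually_sequentially)
    show "\<forall>\<^sub>F t in at_top. dist (y t $ i) c < e"
      unfolding eventually_at_top_linorder
    proof (intro exI allI impI)
      fix t assume "T k \<le> t"
      then have "\<bar>y t $ i - c\<bar> \<le> (1 - \<eta>) ^ k * D0" by (rule close)
      then show "dist (y t $ i) c < e" using k by (simp add: dist_real_def)
    qed
  qed
  then show ?thesis by blast
qed

end

locale setting2 = setting P \<alpha> C for P :: "('s::finite,'a::finite) smdp" and \<alpha> C +
  fixes f finf :: "real^('s \<times> 'a) \<Rightarrow> real"
  assumes AF: "assumption_F f finf"
begin

definition hf :: "real^('s\<times>'a) \<Rightarrow> real^('s\<times>'a)" where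
  "hf q = Tzero P \<alpha> q - q - (\<alpha> * finf q) *\<^sub>R 1"

lemma h_comp: "hf q $ i = F q i - \<alpha> * finf q"
proof -
  obtain s a where i: "i = (s,a)" by force
  show ?thesis
    by (simp add: hf_def Tzero_def F_def \<beta>_def vmax_def i algebra_simps)
qed

definition Lf where "Lf = (SOME L. L-lipschitz_on UNIV f)"

lemma flip: "Lf-lipschitz_on UNIV f"
  using AF unfolding assumption_F_def Lf_def by (metis someI_ex)

lemma Lf_nonneg: "0 \<le> Lf" using flip unfolding lipschitz_on_def by simp

lemma flim: "((\<lambda>c. f (c *\<^sub>R x) / c) \<longlongrightarrow> finf x) at_top"
  using AF unfolding assumption_F_def by blast

lemma phi0: "finf 0 = 0"
proof -
  have "((\<lambda>c. f (c *\<^sub>R 0) / c) \<longlongrightarrow> 0) at_top"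
    by (simp, rule tendsto_divide_0[OF tendsto_const filterlim_at_top_imp_at_infinity[OF filterlim_ident]])
  from tendsto_unique[OF _ flim this] show ?thesis by simp
qed

lemma phi_lip: "dist (finf x) (finf z) \<le> Lf * dist x z"
proof (rule tendsto_upperbound[OF tendsto_dist[OF flim flim]])
  show "at_top \<noteq> (bot :: real filter)" by simp
  show "\<forall>\<^sub>F c in at_top. dist (f (c *\<^sub>R x) / c) (f (c *\<^sub>R z) / c) \<le> Lf * dist x z"
    unfolding eventually_at_top_linorder
  proof (intro exI[of _ 1] allI impI)
    fix c :: real assume c: "1 \<le> c"
    have "dist (f (c *\<^sub>R x)) (f (c *\<^sub>R z)) \<le> Lf * dist (c *\<^sub>R x) (c *\<^sub>R z)"
      using flip unfolding lipschitz_on_def by blast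
    also have "dist (c *\<^sub>R x) (c *\<^sub>R z) = c * dist x z"
      using c by (simp add: dist_norm scaleR_diff_right[symmetric])
    finally have "dist (f (c *\<^sub>R x)) (f (c *\<^sub>R z)) \<le> c * (Lf * dist x z)" by (simp add: algebra_simps)
    then have "dist (f (c *\<^sub>R x)) (f (c *\<^sub>R z)) / c \<le> Lf * dist x z"
      using c by (simp add: divide_le_eq mult.commute)
    moreover have "dist (f (c *\<^sub>R x) / c) (f (c *\<^sub>R z) / c) = dist (f (c *\<^sub>R x)) (f (c *\<^sub>R z)) / c"
      using c by (simp add: dist_real_def diff_divide_distrib[symmetric])
    ultimately show "dist (f (c *\<^sub>R x) / c) (f (c *\<^sub>R z) / c) \<le> Lf * dist x z" by simp
  qed
qed

lemma phi_lip': "\<bar>finf x - finf z\<bar> \<le> Lf * norm (x - z)"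
  using phi_lip[of x z] by (simp add: dist_real_def dist_norm)

lemma phi_cont: "continuous_on UNIV finf"
  by (rule lipschitz_on_continuous_on[OF lipschitz_onI[OF phi_lip Lf_nonneg]])

lemma phi_smono: "strict_mono (\<lambda>c. finf (c *\<^sub>R 1))"
  using AF unfolding assumption_F_def SISTr_def by simp

lemma phi_pos: "0 < c \<Longrightarrow> 0 < finf (c *\<^sub>R 1)"
  using strict_monoD[OF phi_smono, of 0 c] phi0 by simp

lemma phi_neg: "c < 0 \<Longrightarrow> finf (c *\<^sub>R 1) < 0"
  using strict_monoD[OF phi_smono, of c 0] phi0 by simp

lemma phi_le: "c \<le> d \<Longrightarrow> finf (c *\<^sub>R 1) \<le> finf (d *\<^sub>R 1)"
  using strict_mono_less_eq[OF phi_smono] by blast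

lemma F_shift: "F (y + c *\<^sub>R 1) i = F y i"
proof -
  have v: "vmax (y + c *\<^sub>R 1) s = vmax y s + c" for s
  proof -
    have "vmax (y + c *\<^sub>R 1) s = Max ((\<lambda>a. y $ (s,a) + c) ` UNIV)" unfolding vmax_def by simp
    also have "\<dots> = Max ((\<lambda>a. y $ (s,a)) ` UNIV) + c" by (rule Max_add_commute) auto
    finally show ?thesis unfolding vmax_def .
  qed
  have "(\<Sum>s'\<in>UNIV. p (fst i) (snd i) s' * vmax (y + c *\<^sub>R 1) s') = (\<Sum>s'\<in>UNIV. p (fst i) (snd i) s' * vmax y s') + c"
    unfolding v using psum[of "fst i" "snd i"] sum_distrib_right[of "p (fst i) (snd i)" UNIV c, symmetric]
    by (simp add: algebra_simps sum.distrib)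
  then show ?thesis unfolding F_def by simp
qed

lemma sol_cont: "ode_solution hf x \<Longrightarrow> continuous_on {0..} x"
  unfolding ode_solution_def continuous_on_eq_continuous_within
  by (auto intro: has_vector_derivative_continuous)

lemma sol_der:
  assumes "ode_solution hf x" "0 < t"
  shows "((\<lambda>t. x t $ i) has_real_derivative hf (x t) $ i) (at t)"
proof -
  have "(x has_vector_derivative hf (x t)) (at t within {0..})"
    using assms unfolding ode_solution_def by auto
  then have "(x has_vector_derivative hf (x t)) (at t within {0<..})"
    by (rule has_vector_derivative_within_subset) auto
  then have "(x has_vector_derivative hf (x t)) (at t)"
    using has_vector_derivative_within_open[of t "{0<..}"] assms(2) by auto
  then have "((\<lambda>t. x t $ i) has_vector_derivative hf (x t) $ i) (at t)"
    by (rule bounded_linear.has_vector_derivative[OF bounded_linear_vec_nth])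
  then show ?thesis by (simp add: has_real_derivative_iff_has_vector_derivative)
qed

definition gx where "gx x s = finf (x (max 0 s))"
definition rr where "rr x t = - \<alpha> * (integral {-1..t} (gx x) - integral {-1..0} (gx x))"
definition yy where "yy x t = x t - rr x t *\<^sub>R 1"

lemma gx_cont: "ode_solution hf x \<Longrightarrow> continuous_on UNIV (gx x)"
proof -
  assume sol: "ode_solution hf x"
  have "continuous_on UNIV (\<lambda>s. x (max 0 s))"
    by (rule continuous_on_compose2[OF sol_cont[OF sol]]) (auto intro!: continuous_intros)
  then show ?thesis unfolding gx_def
    by (rule continuous_on_compose2[OF phi_cont]) auto
qed

lemma rr_der:
  assumes sol: "ode_solution hf x" and t: "-1 < t"
  shows "(rr x has_real_derivative - \<alpha> * gx x t) (at t)"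
proof -
  have "((\<lambda>u. integral {-1..u} (gx x)) has_real_derivative gx x t) (at t within {-1..t+1})"
    by (rule integral_has_real_derivative) (use continuous_on_subset[OF gx_cont[OF sol]] t in auto)
  then have "((\<lambda>u. integral {-1..u} (gx x)) has_real_derivative gx x t) (at t within {-1<..<t+1})"
    by (rule DERIV_subset) auto
  then have d: "((\<lambda>u. integral {-1..u} (gx x)) has_real_derivative gx x t) (at t)"
    using at_within_open[of t "{-1<..<t+1}"] t by auto
  have "((\<lambda>u. integral {-1..u} (gx x) - integral {-1..0} (gx x)) has_real_derivative gx x t - 0) (at t)"
    by (intro DERIV_diff d DERIV_const)
  from DERIV_cmult[OF this, of "- \<alpha>"] show ?thesis unfolding rr_def[abs_def] by simp
qed

lemma rr_cont: "ode_solution hf x \<Longrightarrow> continuous_on {t0..} (rr x)" if "0 \<le> t0"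
proof -
  assume sol: "ode_solution hf x"
  show ?thesis
    by (rule continuous_at_imp_continuous_on) (use DERIV_isCont[OF rr_der[OF sol]] that in auto)
qed

lemma rr0: "rr x 0 = 0" unfolding rr_def by simp

lemma yy_comp: "yy x t $ i = x t $ i - rr x t" unfolding yy_def by simp

lemma yy_ysol: assumes sol: "ode_solution hf x" shows "ysol (yy x)"
  unfolding ysol_def
proof (intro conjI allI impI)
  fix i
  show "continuous_on {0..} (\<lambda>t. yy x t $ i)" unfolding yy_comp
    by (intro continuous_intros continuous_on_component sol_cont[OF sol] rr_cont[OF _ sol]) simp
next
  fix i and t :: real assume t: "0 < t"
  have "((\<lambda>t. yy x t $ i) has_real_derivative hf (x t) $ i - - \<alpha> * gx x t) (at t)"
    unfolding yy_comp by (intro derivative_intros sol_der[OF sol t] rr_der[OF sol]) (use t in simp)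
  moreover have "hf (x t) $ i - - \<alpha> * gx x t = F (yy x t) i"
  proof -
    have "x t = yy x t + rr x t *\<^sub>R 1" unfolding yy_def by simp
    then have "F (x t) i = F (yy x t) i" using F_shift by metis
    then show ?thesis using t unfolding h_comp gx_def by simp
  qed
  ultimately show "((\<lambda>t. yy x t $ i) has_real_derivative F (yy x t) i) (at t)" by simp
qed

end

context setting2 begin

lemma h0: "hf 0 = 0"
proof -
  have "vmax 0 s = 0" for s unfolding vmax_def by simp
  then have "hf 0 $ i = 0" for i unfolding h_comp F_def phi0 by simp
  then show ?thesis by (simp add: vec_eq_iff)
qed

lemma single_barrier:
  fixes q q' B B' :: "real \<Rightarrow> real"
  assumes "continuous_on {t0..} q" "continuous_on {t0..} B"
    and "\<And>t. t > t0 \<Longrightarrow> (q has_real_derivative q' t) (at t)"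
    and "\<And>t. t > t0 \<Longrightarrow> (B has_real_derivative B' t) (at t)"
    and "q t0 < B t0"
    and "\<And>t. t > t0 \<Longrightarrow> q t \<le> B t \<Longrightarrow> q t = B t \<Longrightarrow> q' t < B' t"
    and "t0 \<le> t"
  shows "q t < B t"
  using barrier[of "UNIV :: unit set" t0 "\<lambda>_. q" B "\<lambda>_. q'" B' "()" t] assms by auto

lemma conv:
  assumes sol: "ode_solution hf x"
  shows "(x \<longlongrightarrow> 0) at_top"
proof -
  let ?y = "yy x"
  have ys: "ysol ?y" by (rule yy_ysol[OF sol])
  obtain c where hc: "\<And>i. ((\<lambda>t. ?y t $ i) \<longlongrightarrow> c) at_top" using ysol_conv[OF ys] by blast
  define w where "w t = c + rr x t" for t
  define ev where "ev t = ?y t - c *\<^sub>R 1" for t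
  have xeq: "x t = ev t + w t *\<^sub>R 1" for t
    unfolding ev_def w_def yy_def by (simp add: algebra_simps scaleR_add_left)
  have ev0: "(ev \<longlongrightarrow> 0) at_top"
  proof (rule vec_tendstoI)
    fix i
    have "((\<lambda>t. ?y t $ i - c) \<longlongrightarrow> c - c) at_top" by (intro tendsto_diff hc tendsto_const)
    then show "((\<lambda>t. ev t $ i) \<longlongrightarrow> 0 $ i) at_top" unfolding ev_def by simp
  qed
  have wder: "(w has_real_derivative - \<alpha> * finf (x t)) (at t)" if "0 < t" for t
  proof -
    have "(w has_real_derivative 0 + - \<alpha> * gx x t) (at t)"
      unfolding w_def[abs_def] by (intro DERIV_add DERIV_const rr_der[OF sol]) (use that in simp)
    then show ?thesis using that unfolding gx_def by simp
  qed
  have wcont: "continuous_on {t0..} w" if "0 \<le> t0" for t0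
    unfolding w_def[abs_def] by (intro continuous_intros rr_cont[OF that sol])
  have lipw: "\<bar>finf (x t) - finf (w t *\<^sub>R 1)\<bar> \<le> Lf * norm (ev t)" for t
    using phi_lip'[of "x t" "w t *\<^sub>R 1"] unfolding xeq by simp
  define q where "q t = (w t)\<^sup>2" for t
  have qder: "(q has_real_derivative 2 * w t * (- \<alpha> * finf (x t))) (at t)" if "0 < t" for t
    unfolding q_def[abs_def] power2_eq_square using DERIV_mult[OF wder[OF that] wder[OF that]]
    by (simp add: algebra_simps)
  have qcont: "continuous_on {t0..} q" if "0 \<le> t0" for t0
    unfolding q_def[abs_def] by (intro continuous_intros wcont[OF that])
  have "((\<lambda>t. w t) \<longlongrightarrow> 0) at_top"
  proof (rule tendstoI)
    fix e :: real assume e: "0 < e"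
    define a where "a = min (finf ((e/2) *\<^sub>R 1)) (- finf ((- e/2) *\<^sub>R 1))"
    have a: "0 < a" unfolding a_def using phi_pos[of "e/2"] phi_neg[of "- e/2"] e by auto
    define \<kappa> where "\<kappa> = \<alpha> * e * a / 2"
    have kappa: "0 < \<kappa>" unfolding \<kappa>_def using alpha e a by simp
    have "\<forall>\<^sub>F t in at_top. norm (ev t) < a / (2 * (Lf + 1))"
      using order_tendstoD(2)[OF tendsto_norm[OF ev0], of "a / (2 * (Lf + 1))"] a Lf_nonneg by simp
    then obtain T0 where T0: "\<And>t. T0 \<le> t \<Longrightarrow> norm (ev t) < a / (2 * (Lf + 1))"
      unfolding eventually_at_top_linorder by blast
    define T1 where "T1 = max T0 1"
    have T1: "0 < T1" "T0 \<le> T1" unfolding T1_def by auto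
    have key: "2 * w t * (- \<alpha> * finf (x t)) \<le> - \<kappa>" if t: "T1 \<le> t" "e/2 \<le> \<bar>w t\<bar>" for t
    proof -
      have "Lf * norm (ev t) \<le> (Lf + 1) * norm (ev t)" by (simp add: algebra_simps)
      also have "\<dots> < (Lf + 1) * (a / (2 * (Lf + 1)))"
        using T0[of t] t T1 Lf_nonneg by (intro mult_strict_left_mono) auto
      also have "\<dots> = a / 2" using Lf_nonneg by (simp add: field_simps)
      finally have L: "\<bar>finf (x t) - finf (w t *\<^sub>R 1)\<bar> < a / 2" using lipw[of t] by linarith
      have "e * a / 4 \<le> w t * finf (x t)"
      proof (cases "w t \<ge> 0")
        case True
        then have wt: "e/2 \<le> w t" using t by simp
        have "a \<le> finf ((e/2) *\<^sub>R 1)" unfolding a_def by simp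
        also have "\<dots> \<le> finf (w t *\<^sub>R 1)" by (rule phi_le[OF wt])
        finally have "a / 2 \<le> finf (x t)" using L by linarith
        then have "(e/2) * (a/2) \<le> w t * finf (x t)"
          using wt e a by (intro mult_mono) auto
        then show ?thesis by simp
      next
        case False
        then have wt: "w t \<le> - e/2" using t by simp
        have "finf (w t *\<^sub>R 1) \<le> finf ((- e/2) *\<^sub>R 1)" by (rule phi_le[OF wt])
        also have "\<dots> \<le> - a" unfolding a_def by simp
        finally have "finf (x t) \<le> - a / 2" using L by linarith
        then have "(e/2) * (a/2) \<le> (- w t) * (- finf (x t))"
          using wt e a by (intro mult_mono) auto
        then show ?thesis by simp
      qed
      then have "\<alpha> * (e * a / 4) \<le> \<alpha> * (w t * finf (x t))" using alpha by (intro mult_left_mono) auto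
      then show ?thesis unfolding \<kappa>_def by (simp add: algebra_simps)
    qed
    have qnn: "0 \<le> q t" for t unfolding q_def by simp
    have "\<exists>t1\<ge>T1. q t1 < e\<^sup>2"
    proof (rule ccontr)
      assume "\<not> ?thesis"
      then have big: "\<And>t. T1 \<le> t \<Longrightarrow> e\<^sup>2 \<le> q t" by (simp add: not_less)
      have bigw: "e/2 \<le> \<bar>w t\<bar>" if "T1 \<le> t" for t
      proof -
        have "e\<^sup>2 \<le> \<bar>w t\<bar>\<^sup>2" using big[OF that] unfolding q_def by simp
        then have "e \<le> \<bar>w t\<bar>" by (rule power2_le_imp_le[OF _ abs_ge_zero])
        then show ?thesis using e by simp
      qed
      define B where "B t = q T1 + 1 - \<kappa> / 2 * (t - T1)" for t
      define ts where "ts = T1 + 2 * (q T1 + 1) / \<kappa>"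
      have "q ts < B ts"
      proof (rule single_barrier[of T1 q B "\<lambda>t. 2 * w t * (- \<alpha> * finf (x t))" "\<lambda>t. - \<kappa> / 2"])
        show "continuous_on {T1..} q" using qcont T1 by simp
        show "continuous_on {T1..} B" unfolding B_def by (intro continuous_intros)
        show "(q has_real_derivative 2 * w t * (- \<alpha> * finf (x t))) (at t)" if "T1 < t" for t
          using qder T1 that by simp
        show "(B has_real_derivative - \<kappa> / 2) (at t)" for t
          unfolding B_def[abs_def] by (auto intro!: derivative_eq_intros)
        show "q T1 < B T1" unfolding B_def by simp
        show "2 * w t * (- \<alpha> * finf (x t)) < - \<kappa> / 2" if "T1 < t" for t
          using key[of t] bigw[of t] that kappa by simp
        show "T1 \<le> ts" unfolding ts_def using kappa qnn[of T1] by simp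
      qed
      moreover have "B ts = 0" unfolding B_def ts_def using kappa by (simp add: field_simps)
      ultimately show False using qnn[of ts] by simp
    qed
    then obtain t1 where t1: "T1 \<le> t1" "q t1 < e\<^sup>2" by blast
    have "q t < e\<^sup>2" if "t1 \<le> t" for t
    proof (rule single_barrier[of t1 q "\<lambda>_. e\<^sup>2" "\<lambda>t. 2 * w t * (- \<alpha> * finf (x t))" "\<lambda>_. 0"])
      show "continuous_on {t1..} q" using qcont T1 t1 by simp
      show "continuous_on {t1..} (\<lambda>_. e\<^sup>2)" by simp
      show "(q has_real_derivative 2 * w t * (- \<alpha> * finf (x t))) (at t)" if "t1 < t" for t
        using qder T1 t1 that by simp
      show "((\<lambda>_. e\<^sup>2) has_real_derivative 0) (at t)" for t by simp
      show "q t1 < e\<^sup>2" by fact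
      show "2 * w t * (- \<alpha> * finf (x t)) < 0" if "t1 < t" "q t \<le> e\<^sup>2" "q t = e\<^sup>2" for t
      proof -
        have "(w t)\<^sup>2 = e\<^sup>2" using that unfolding q_def by simp
        then have "sqrt ((w t)\<^sup>2) = sqrt (e\<^sup>2)" by simp
        then have "\<bar>w t\<bar> = \<bar>e\<bar>" by (simp only: real_sqrt_abs)
        then have "\<bar>w t\<bar> = e" using e by simp
        then have k: "2 * w t * (- \<alpha> * finf (x t)) \<le> - \<kappa>" using key[of t] that t1 e by simp
        then show ?thesis using kappa by linarith
      qed
      show "t1 \<le> t" by fact
    qed
    then have "\<bar>w t\<bar> < e" if "t1 \<le> t" for t
      using that e power_less_imp_less_base[of "\<bar>w t\<bar>" 2 e] unfolding q_def by simp
    then show "\<forall>\<^sub>F t in at_top. dist (w t) 0 < e"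
      unfolding eventually_at_top_linorder dist_real_def by auto
  qed
  then have "((\<lambda>t. ev t + w t *\<^sub>R 1) \<longlongrightarrow> 0 + 0 *\<^sub>R 1) at_top"
    by (intro tendsto_add ev0 tendsto_scaleR tendsto_const)
  then show ?thesis unfolding xeq[symmetric] by simp
qed

lemma uniq_helper: "ode_solution hf (\<lambda>t. 0)"
  unfolding ode_solution_def h0 by simp

end

context setting2 begin

lemma stab: "lyapunov_stable hf 0"
  unfolding lyapunov_stable_def
proof (intro allI impI)
  fix \<epsilon> :: real assume eps: "0 < \<epsilon>"
  define n where "n = real CARD('s \<times> 'a)"
  have c0: "0 < CARD('s \<times> 'a)" by (rule finite_UNIV_card_ge_0) simp
  have n1: "1 \<le> n" unfolding n_def using c0 by (metis Suc_le_eq of_nat_1 of_nat_le_iff One_nat_def)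
  define \<rho> where "\<rho> = \<epsilon> / (2 * n)"
  have rho: "0 < \<rho>" unfolding \<rho>_def using eps n1 by simp
  define a where "a = min (finf (\<rho> *\<^sub>R 1)) (- finf ((- \<rho>) *\<^sub>R 1))"
  have a: "0 < a" unfolding a_def using phi_pos[OF rho] phi_neg[of "- \<rho>"] rho by auto
  define \<delta> where "\<delta> = min (\<epsilon> / (2 * n)) (a / (n * (Lf + 1)))"
  have delta: "0 < \<delta>" unfolding \<delta>_def using eps n1 a Lf_nonneg by simp
  have norm1: "norm (1 :: real^('s \<times> 'a)) \<le> n"
    using norm_le_l1_cart[of "1 :: real^('s \<times> 'a)"] unfolding n_def by simp
  show "\<exists>\<delta>>0. \<forall>x. ode_solution hf x \<and> dist (x 0) 0 < \<delta> \<longrightarrow> (\<forall>t\<ge>0. dist (x t) 0 < \<epsilon>)"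
  proof (intro exI[of _ \<delta>] conjI allI impI delta)
    fix x and t :: real
    assume H: "ode_solution hf x \<and> dist (x 0) 0 < \<delta>" and t: "0 \<le> t"
    then have sol: "ode_solution hf x" and N0: "norm (x 0) < \<delta>" by auto
    let ?y = "yy x"
    have ys: "ysol ?y" by (rule yy_ysol[OF sol])
    have y0: "?y 0 $ i = x 0 $ i" for i unfolding yy_comp rr0 by simp
    have yb: "\<bar>?y s $ i\<bar> \<le> norm (x 0)" if "0 \<le> s" for s i
    proof -
      have c: "x 0 $ j \<le> norm (x 0)" "- norm (x 0) \<le> x 0 $ j" for j
        using component_le_norm_cart[of "x 0" j] by (simp_all add: abs_le_iff)
      have "?y s $ i \<le> norm (x 0)"
        by (rule Y1up_all[OF ys order_refl _ that]) (simp only: y0 c)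
      moreover have "- norm (x 0) \<le> ?y s $ i"
        by (rule Y1lo[OF ys order_refl _ that]) (simp only: y0 c)
      ultimately show ?thesis by simp
    qed
    have ny: "norm (?y s) \<le> n * norm (x 0)" if "0 \<le> s" for s
    proof -
      have "norm (?y s) \<le> (\<Sum>i\<in>UNIV. \<bar>?y s $ i\<bar>)" by (rule norm_le_l1_cart)
      also have "\<dots> \<le> of_nat (card (UNIV :: ('s \<times> 'a) set)) * norm (x 0)"
        by (rule sum_bounded_above) (use yb that in auto)
      finally show ?thesis unfolding n_def by simp
    qed
    have nx0: "n * norm (x 0) \<le> a / (Lf + 1)"
    proof -
      have "n * norm (x 0) \<le> n * \<delta>" using N0 n1 by simp
      also have "\<dots> \<le> n * (a / (n * (Lf + 1)))" unfolding \<delta>_def using n1 by (intro mult_left_mono) auto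
      also have "\<dots> = a / (Lf + 1)" using n1 by simp
      finally show ?thesis .
    qed
    have LY: "Lf * norm (?y s) < a" if "0 \<le> s" for s
    proof -
      have "Lf * norm (?y s) \<le> Lf * (a / (Lf + 1))"
        using ny[OF that] nx0 Lf_nonneg by (intro mult_left_mono) auto
      also have "\<dots> < a" using a Lf_nonneg by (simp add: field_simps)
      finally show ?thesis .
    qed
    define q where "q s = (rr x s)\<^sup>2" for s
    have qder: "(q has_real_derivative 2 * rr x s * (- \<alpha> * finf (x s))) (at s)" if "0 < s" for s
    proof -
      have d: "(rr x has_real_derivative - \<alpha> * finf (x s)) (at s)"
        using rr_der[OF sol, of s] that unfolding gx_def by simp
      show ?thesis unfolding q_def[abs_def] power2_eq_square using DERIV_mult[OF d d]
        by (simp add: algebra_simps)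
    qed
    have "q t < \<rho>\<^sup>2"
    proof (rule single_barrier[of 0 q "\<lambda>_. \<rho>\<^sup>2" "\<lambda>s. 2 * rr x s * (- \<alpha> * finf (x s))" "\<lambda>_. 0"])
      show "continuous_on {0..} q" unfolding q_def[abs_def]
        by (intro continuous_intros rr_cont[OF _ sol]) simp
      show "continuous_on {0..} (\<lambda>_. \<rho>\<^sup>2)" by simp
      show "(q has_real_derivative 2 * rr x s * (- \<alpha> * finf (x s))) (at s)" if "0 < s" for s
        using qder that by simp
      show "((\<lambda>_. \<rho>\<^sup>2) has_real_derivative 0) (at s)" for s by simp
      show "q 0 < \<rho>\<^sup>2" unfolding q_def rr0 using rho by simp
      show "0 \<le> t" by fact
      fix s assume s: "0 < s" "q s \<le> \<rho>\<^sup>2" "q s = \<rho>\<^sup>2"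
      have "(rr x s)\<^sup>2 = \<rho>\<^sup>2" using s unfolding q_def by simp
      then have "sqrt ((rr x s)\<^sup>2) = sqrt (\<rho>\<^sup>2)" by simp
      then have "\<bar>rr x s\<bar> = \<bar>\<rho>\<bar>" by (simp only: real_sqrt_abs)
      then have ar: "\<bar>rr x s\<bar> = \<rho>" using rho by simp
      have xs: "x s - rr x s *\<^sub>R 1 = ?y s" unfolding yy_def by simp
      have L: "\<bar>finf (x s) - finf (rr x s *\<^sub>R 1)\<bar> < a"
        using phi_lip'[of "x s" "rr x s *\<^sub>R 1"] LY[of s] s unfolding xs by simp
      have L2: "- a < finf (x s) - finf (rr x s *\<^sub>R 1)" "finf (x s) - finf (rr x s *\<^sub>R 1) < a"
        using abs_less_iff[THEN iffD1, OF L] by auto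
      show "2 * rr x s * (- \<alpha> * finf (x s)) < 0"
      proof (cases "rr x s \<ge> 0")
        case True
        then have r: "rr x s = \<rho>" using ar by simp
        have "a \<le> finf (\<rho> *\<^sub>R 1)" unfolding a_def by simp
        then have pos: "0 < finf (x s)" using L2 unfolding r by linarith
        have "0 < 2 * \<rho> * (\<alpha> * finf (x s))" using rho alpha pos by (intro mult_pos_pos) auto
        moreover have "2 * rr x s * (- \<alpha> * finf (x s)) = - (2 * \<rho> * (\<alpha> * finf (x s)))"
          unfolding r by simp
        ultimately show ?thesis by linarith
      next
        case False
        then have r: "rr x s = - \<rho>" using ar by simp
        have "finf ((- \<rho>) *\<^sub>R 1) \<le> - a" unfolding a_def by simp
        then have neg: "finf (x s) < 0" using L2 unfolding r by linarith
        have "0 < 2 * \<rho> * (\<alpha> * (- finf (x s)))" using rho alpha neg by (intro mult_pos_pos) auto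
        moreover have "2 * rr x s * (- \<alpha> * finf (x s)) = - (2 * \<rho> * (\<alpha> * (- finf (x s))))"
          unfolding r by simp
        ultimately show ?thesis by linarith
      qed
    qed
    then have "(rr x t)\<^sup>2 < \<rho>\<^sup>2" unfolding q_def .
    then have rt: "\<bar>rr x t\<bar> < \<rho>" using power_less_imp_less_base[of "\<bar>rr x t\<bar>" 2 \<rho>] rho by simp
    have "x t = ?y t + rr x t *\<^sub>R 1" unfolding yy_def by simp
    then have "norm (x t) \<le> norm (?y t) + \<bar>rr x t\<bar> * norm (1 :: real^('s \<times> 'a))"
      using norm_triangle_ineq[of "?y t" "rr x t *\<^sub>R 1"] by simp
    also have "\<dots> \<le> n * norm (x 0) + \<rho> * n"
      using ny[OF t] rt norm1 by (intro add_mono mult_mono) auto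
    also have "\<dots> < n * \<delta> + \<rho> * n" using N0 n1 by simp
    also have "\<dots> \<le> \<epsilon> / 2 + \<epsilon> / 2"
    proof -
      have "n * \<delta> \<le> n * (\<epsilon> / (2 * n))" unfolding \<delta>_def using n1 by (intro mult_left_mono) auto
      also have "\<dots> = \<epsilon> / 2" using n1 by simp
      finally have "n * \<delta> \<le> \<epsilon> / 2" .
      moreover have "\<rho> * n = \<epsilon> / 2" unfolding \<rho>_def using n1 by simp
      ultimately show ?thesis by linarith
    qed
    finally show "dist (x t) 0 < \<epsilon>" by simp
  qed
qed

lemma GAS0: "GAS_equilibrium hf 0"
  unfolding GAS_equilibrium_def
proof (intro conjI allI impI)
  show "hf 0 = 0" by (rule h0)
  show "lyapunov_stable hf 0" by (rule stab)
  fix x assume "ode_solution hf x"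
  then show "(x \<longlongrightarrow> 0) at_top" by (rule conv)
qed

lemma GAS_unique: "GAS_equilibrium hf z \<Longrightarrow> z = 0"
proof -
  assume "GAS_equilibrium hf z"
  then have "\<forall>x. ode_solution hf x \<longrightarrow> (x \<longlongrightarrow> z) at_top"
    unfolding GAS_equilibrium_def by (rule conjunct1[OF conjunct2])
  then have "((\<lambda>t::real. 0) \<longlongrightarrow> z) at_top" using uniq_helper by blast
  then show "z = 0" by (simp add: tendsto_const_iff)
qed

end

theorem proposition4p2:
  fixes P :: "('s::finite, 'a::finite) smdp"
    and f finf :: "real^('s \<times> 'a) \<Rightarrow> real"
    and \<alpha> :: real
  assumes "smdp_kernel P"
    and "assumption_M P"
    and "weakly_communicating P"
    and "assumption_F f finf"
    and "0 < \<alpha>" and "\<forall>s a. \<alpha> \<le> tmean P s a"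
  shows "GAS_equilibrium (\<lambda>q. Tzero P \<alpha> q - q - (\<alpha> * finf q) *\<^sub>R 1) 0 \<and>
         (\<forall>z. GAS_equilibrium (\<lambda>q. Tzero P \<alpha> q - q - (\<alpha> * finf q) *\<^sub>R 1) z \<longrightarrow> z = 0)"
proof -
  obtain C where CC: "closed_comm_class P C \<and> (\<forall>C'. closed_comm_class P C' \<longrightarrow> C' = C) \<and>
      (\<forall>s. s \<notin> C \<longrightarrow> (\<forall>\<pi>. is_policy \<pi> \<longrightarrow> transient_under P \<pi> s))"
    using assms(3) unfolding weakly_communicating_def by (rule exE)
  have C: "closed_comm_class P C" using CC by (rule conjunct1)
  have tr: "\<And>s \<pi>. s \<notin> C \<Longrightarrow> is_policy \<pi> \<Longrightarrow> transient_under P \<pi> s"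
    using CC by simp
  interpret S: setting2 P \<alpha> C f finf
  proof unfold_locales
    show "smdp_kernel P" by fact
    show "0 < \<alpha>" by fact
    show "\<And>s a. \<alpha> \<le> tmean P s a" using assms(6) by blast
    show "closed_set P C" "communicating P C" using C unfolding closed_comm_class_def by auto
    show "\<And>s \<pi>. s \<notin> C \<Longrightarrow> is_policy \<pi> \<Longrightarrow> transient_under P \<pi> s" by (rule tr)
    show "assumption_F f finf" by fact
  qed
  have eq: "(\<lambda>q. Tzero P \<alpha> q - q - (\<alpha> * finf q) *\<^sub>R 1) = S.hf"
    by (simp add: S.hf_def fun_eq_iff)
  show ?thesis unfolding eq by (intro conjI allI impI S.GAS0) (rule S.GAS_unique)
qed

end
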